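(* Let $L_n:=|C(X_1^n)|$. As $t\to\infty$, \[\frac32(2t+1)-\mathbb E[L_{2t+1}]\ge\Bigl(\frac{1}{18\sqrt\pi}+o(1)\Bigr)t^{-1/2},\qquad \frac32(2t)-\mathbb E[L_{2t}]\ge\Bigl(\frac{1}{9\sqrt\pi}+o(1)\Bigr)t^{-1/2}.\] In particular, for every fixed $0<c<\frac{\sqrt2}{18\sqrt\pi}$ there exists $n_0(c)\in\mathbb N$ such that $\mathbb E[|C(X_1^n)|]\le\frac32n-\frac{c}{\sqrt n}$ for all $n\ge n_0(c)$.
   Context: Let $\mathcal X=\{A,B,C,D\}$ and let $(X_i)_{i\ge1}$ be the first-order Markov chain on $\mathcal X$ with $\mathbb P(X_1=x)=1/4$ for all $x$ and transitions: from $A$ to $A$ or $C$ w.p. $1/2$ each; from $B$ to $B$ or $D$ w.p. $1/2$ each; from $C$ and from $D$ to each of $A,B,C,D$ w.p. $1/4$. A nonempty string is admissible if all consecutive transitions have positive probability; $\mathcal A$ is the set of admissible nonempty strings; $K(u):=-\log_2\mathbb P(X_1^m=u)$ for $u=x_1^m\in\mathcal A$. Shortlex source code $C:\mathcal A\to\{0,1\}^+$: order nonempty binary strings by length then lexicographically as $b_1,b_2,\dots$; order $\mathcal A$ as $u_1,u_2,\dots$ by increasing $K$, then increasing length, then lexicographically with $A<B<C<D$; set $C(u_j):=b_j$ (the code $C$ is distinct from the symbol $C$). $|w|$ is the length of a binary string $w$. *)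

theory Defs
  imports Complex_Main
begin

datatype sym = SA | SB | SC | SD

fun trans :: "sym \<Rightarrow> sym \<Rightarrow> real" where
  "trans SA y = (if y = SA \<or> y = SC then 1/2 else 0)"
| "trans SB y = (if y = SB \<or> y = SD then 1/2 else 0)"
| "trans SC y = 1/4"
| "trans SD y = 1/4"

fun tprod :: "sym list \<Rightarrow> real" where
  "tprod (x # y # xs) = trans x y * tprod (y # xs)"
| "tprod _ = 1"

text \<open>P(X_1^m = u), with uniform initial distribution.\<close>
definition Pstr :: "sym list \<Rightarrow> real" where
  "Pstr u = (if u = [] then 0 else (1/4) * tprod u)"

definition admissible :: "sym list \<Rightarrow> bool" where
  "admissible u \<longleftrightarrow> u \<noteq> [] \<and> (\<forall>i. Suc i < length u \<longrightarrow> trans (u ! i) (u ! Suc i) > 0)"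

definition K :: "sym list \<Rightarrow> real" where
  "K u = - log 2 (Pstr u)"

fun sym_idx :: "sym \<Rightarrow> nat" where
  "sym_idx SA = 0" | "sym_idx SB = 1" | "sym_idx SC = 2" | "sym_idx SD = 3"

definition code_prec :: "sym list \<Rightarrow> sym list \<Rightarrow> bool" where
  "code_prec v u \<longleftrightarrow> K v < K u \<or> (K v = K u \<and> (length v < length u \<or>
     (length v = length u \<and> (map sym_idx v, map sym_idx u) \<in> lexord {(a, b). a < b})))"

text \<open>Number of admissible strings before u (u = u_j iff rank u = j - 1).\<close>
definition rank :: "sym list \<Rightarrow> nat" where
  "rank u = card {v. admissible v \<and> code_prec v u}"

definition bin_prec :: "bool list \<Rightarrow> bool list \<Rightarrow> bool" where
  "bin_prec w' w \<longleftrightarrow> length w' < length w \<or>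
     (length w' = length w \<and> (map of_bool w' :: nat list, map of_bool w) \<in> lexord {(a, b). a < b})"

text \<open>The shortlex source code: C(u_j) = b_j.\<close>
definition code :: "sym list \<Rightarrow> bool list" where
  "code u = (THE w. w \<noteq> [] \<and> card {w'. w' \<noteq> [] \<and> bin_prec w' w} = rank u)"

definition EL :: "nat \<Rightarrow> real" where
  "EL n = (\<Sum>u\<in>{u. length u = n \<and> admissible u}. Pstr u * real (length (code u)))"

end

theory Submission
  imports Defs "HOL-Analysis.Gamma_Function"
begin

fun wt :: "sym \<Rightarrow> nat" where
  "wt SA = 1" | "wt SB = 1" | "wt SC = 2" | "wt SD = 2"

fun kn :: "sym list \<Rightarrow> nat" where
  "kn [] = 0" | "kn [x] = 2" | "kn (x # y # r) = wt x + kn (y # r)"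

lemma sym_UNIV: "(UNIV :: sym set) = {SA, SB, SC, SD}"
  using sym.exhaust by auto

lemma trans_pos: "trans x y > 0 \<Longrightarrow> trans x y = (1/2) ^ wt x"
  by (cases x; cases y; simp add: power2_eq_square)

lemma adm_single[simp]: "admissible [x]"
  by (simp add: admissible_def)

lemma adm_Cons2: "admissible (x # y # r) \<longleftrightarrow> trans x y > 0 \<and> admissible (y # r)"
proof
  assume a: "admissible (x # y # r)"
  have "trans x y > 0" using a unfolding admissible_def by (metis One_nat_def length_Cons nth_Cons_0 nth_Cons_Suc zero_less_Suc Suc_less_eq)
  moreover have "admissible (y # r)" unfolding admissible_def
  proof (intro conjI allI impI)
    fix i assume "Suc i < length (y # r)"
    then have "Suc (Suc i) < length (x # y # r)" by simp
    then have "trans ((x # y # r) ! Suc i) ((x # y # r) ! Suc (Suc i)) > 0" using a unfolding admissible_def by blast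
    then show "trans ((y # r) ! i) ((y # r) ! Suc i) > 0" by simp
  qed simp
  ultimately show "trans x y > 0 \<and> admissible (y # r)" by simp
next
  assume a: "trans x y > 0 \<and> admissible (y # r)"
  show "admissible (x # y # r)" unfolding admissible_def
  proof (intro conjI allI impI)
    fix i assume i: "Suc i < length (x # y # r)"
    show "trans ((x # y # r) ! i) ((x # y # r) ! Suc i) > 0"
    proof (cases i)
      case 0 then show ?thesis using a by simp
    next
      case (Suc j)
      then have "Suc j < length (y # r)" using i by simp
      then have "trans ((y # r) ! j) ((y # r) ! Suc j) > 0" using a unfolding admissible_def by blast
      then show ?thesis using Suc by simp
    qed
  qed simp
qed

lemma adm_nonempty: "admissible u \<Longrightarrow> u \<noteq> []"
  by (simp add: admissible_def)

lemma adm_tail: "admissible (x # y # r) \<Longrightarrow> admissible (y # r)"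
  using adm_Cons2 by blast

lemma Pstr_kn: "admissible u \<Longrightarrow> Pstr u = (1/2) ^ kn u"
proof (induction u rule: kn.induct)
  case 1 then show ?case by (simp add: admissible_def)
next
  case (2 x) then show ?case by (simp add: Pstr_def power2_eq_square)
next
  case (3 x y r)
  have t: "trans x y > 0" and ar: "admissible (y # r)" using 3(2) adm_Cons2 by auto
  have "Pstr (x # y # r) = trans x y * Pstr (y # r)" by (simp add: Pstr_def)
  also have "\<dots> = (1/2) ^ wt x * (1/2) ^ kn (y # r)" using trans_pos[OF t] 3(1)[OF ar] by simp
  finally show ?case by (simp add: power_add)
qed

lemma K_kn: "admissible u \<Longrightarrow> K u = real (kn u)"
  by (simp add: K_def Pstr_kn power_one_over log_divide)

lemma kn_bounds: "u \<noteq> [] \<Longrightarrow> length u + 1 \<le> kn u \<and> kn u \<le> 2 * length u"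
proof (induction u rule: kn.induct)
  case (3 x y r) then show ?case by (cases x) auto
qed auto

definition Gset :: "(nat \<Rightarrow> bool) \<Rightarrow> nat \<Rightarrow> sym list set" where
  "Gset P k = {u. admissible u \<and> P (length u) \<and> kn u = k}"

lemma Gset_finite: "finite (Gset P k)"
proof (rule finite_subset)
  show "Gset P k \<subseteq> {xs. set xs \<subseteq> UNIV \<and> length xs \<le> k}"
    proof
    fix u assume "u \<in> Gset P k"
    then have "admissible u" "kn u = k" by (auto simp: Gset_def)
    then have "length u \<le> k" using kn_bounds[of u] adm_nonempty[of u] by linarith
    then show "u \<in> {xs. set xs \<subseteq> UNIV \<and> length xs \<le> k}" by simp
  qed
  show "finite {xs. set xs \<subseteq> (UNIV::sym set) \<and> length xs \<le> k}"
    by (rule finite_lists_length_le) (simp add: sym_UNIV)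
qed

lemma Gset_decomp:
  assumes k: "k \<ge> 3"
  shows "Gset P k = Cons SA ` {r \<in> Gset (\<lambda>l. P (Suc l)) (k-1). hd r \<in> {SA,SC}}
     \<union> Cons SB ` {r \<in> Gset (\<lambda>l. P (Suc l)) (k-1). hd r \<in> {SB,SD}}
     \<union> Cons SC ` Gset (\<lambda>l. P (Suc l)) (k-2) \<union> Cons SD ` Gset (\<lambda>l. P (Suc l)) (k-2)"
    (is "?L = ?R")
proof
  show "?L \<subseteq> ?R"
  proof
    fix u assume u: "u \<in> ?L"
    then have a: "admissible u" and p: "P (length u)" and kk: "kn u = k" by (auto simp: Gset_def)
    obtain x r0 where u0: "u = x # r0" using adm_nonempty[OF a] by (cases u) auto
    have "r0 \<noteq> []" using kk k u0 by auto
    then obtain y r where r0: "r0 = y # r" by (cases r0) auto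
    have t: "trans x y > 0" and ar: "admissible (y # r)" using a u0 r0 adm_Cons2 by auto
    have kr: "kn (y # r) = k - wt x" using kk u0 r0 by simp
    have pr: "P (Suc (length (y # r)))" using p u0 r0 by simp
    show "u \<in> ?R"
    proof (cases x)
      case SA
      then have "y \<in> {SA, SC}" using t by (cases y) auto
      then show ?thesis using SA ar kr pr u0 r0 by (auto simp: Gset_def)
    next
      case SB
      then have "y \<in> {SB, SD}" using t by (cases y) auto
      then show ?thesis using SB ar kr pr u0 r0 by (auto simp: Gset_def)
    next
      case SC
      then show ?thesis using ar kr pr u0 r0 by (auto simp: Gset_def)
    next
      case SD
      then show ?thesis using ar kr pr u0 r0 by (auto simp: Gset_def)
    qed
  qed
next
  show "?R \<subseteq> ?L"
  proof
    fix u assume "u \<in> ?R"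
    then obtain x r where u: "u = x # r" and ar: "admissible r" and pr: "P (Suc (length r))"
      and kr: "kn r = k - wt x" and hx: "x = SA \<longrightarrow> hd r \<in> {SA,SC}" and hy: "x = SB \<longrightarrow> hd r \<in> {SB,SD}"
      by (auto simp: Gset_def)
    obtain y r' where r: "r = y # r'" using adm_nonempty[OF ar] by (cases r) auto
    have "trans x y > 0" using hx hy r by (cases x; cases y; auto)
    then have "admissible u" using u r ar adm_Cons2 by simp
    moreover have "kn u = k" using u r kr k by (cases x) auto
    ultimately show "u \<in> ?L" using pr u by (simp add: Gset_def)
  qed
qed

lemma Gset_rec:
  assumes k: "k \<ge> 3"
  shows "card (Gset P k) = card (Gset (\<lambda>l. P (Suc l)) (k-1)) + 2 * card (Gset (\<lambda>l. P (Suc l)) (k-2))"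
proof -
  let ?Q = "\<lambda>l. P (Suc l)"
  let ?A = "{r \<in> Gset ?Q (k-1). hd r \<in> {SA,SC}}"
  let ?B = "{r \<in> Gset ?Q (k-1). hd r \<in> {SB,SD}}"
  let ?C = "Gset ?Q (k-2)"
  have fA: "finite ?A" and fB: "finite ?B" and fC: "finite ?C" using Gset_finite by auto
  have "card (Gset P k) = card (Cons SA ` ?A \<union> Cons SB ` ?B \<union> Cons SC ` ?C \<union> Cons SD ` ?C)"
    using Gset_decomp[OF k] by simp
  also have "\<dots> = card (Cons SA ` ?A \<union> Cons SB ` ?B \<union> Cons SC ` ?C) + card (Cons SD ` ?C)"
    by (rule card_Un_disjoint) (use fA fB fC in auto)
  also have "card (Cons SA ` ?A \<union> Cons SB ` ?B \<union> Cons SC ` ?C) = card (Cons SA ` ?A \<union> Cons SB ` ?B) + card (Cons SC ` ?C)"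
    by (rule card_Un_disjoint) (use fA fB fC in auto)
  also have "card (Cons SA ` ?A \<union> Cons SB ` ?B) = card (Cons SA ` ?A) + card (Cons SB ` ?B)"
    by (rule card_Un_disjoint) (use fA fB fC in auto)
  also have "card (Cons SA ` ?A) = card ?A" by (rule card_image) simp
  also have "card (Cons SB ` ?B) = card ?B" by (rule card_image) simp
  also have "card (Cons SC ` ?C) = card ?C" by (rule card_image) simp
  also have "card (Cons SD ` ?C) = card ?C" by (rule card_image) simp
  also have "card ?A + card ?B = card (Gset ?Q (k-1))"
  proof -
    have "Gset ?Q (k-1) = ?A \<union> ?B"
    proof -
      have "hd r \<in> {SA,SC} \<or> hd r \<in> {SB,SD}" for r by (cases "hd r") auto
      then show ?thesis by blast
    qed
    moreover have "card (?A \<union> ?B) = card ?A + card ?B"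
      by (rule card_Un_disjoint) (use fA fB in auto)
    ultimately show ?thesis by simp
  qed
  finally show ?thesis by simp
qed

lemma pred_card_less:
  assumes fin: "finite C" and x: "x \<in> C" and y: "y \<in> C" and rxy: "r x y" and irr: "\<not> r x x"
    and tr: "\<And>v. v \<in> C \<Longrightarrow> r v x \<Longrightarrow> r v y"
  shows "card {v\<in>C. r v x} < card {v\<in>C. r v y}"
proof (rule psubset_card_mono)
  show "finite {v\<in>C. r v y}" using fin by simp
  show "{v\<in>C. r v x} \<subset> {v\<in>C. r v y}" using x rxy irr tr by blast
qed

lemma pos_bij:
  assumes fin: "finite C" and irr: "\<forall>x\<in>C. \<not> r x x"
    and tr: "\<forall>x\<in>C. \<forall>y\<in>C. \<forall>z\<in>C. r x y \<longrightarrow> r y z \<longrightarrow> r x z"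
    and tot: "\<forall>x\<in>C. \<forall>y\<in>C. x \<noteq> y \<longrightarrow> r x y \<or> r y x"
  shows "bij_betw (\<lambda>u. card {v\<in>C. r v u}) C {0..<card C}"
proof -
  let ?f = "\<lambda>u. card {v\<in>C. r v u}"
  have inj: "inj_on ?f C"
  proof (rule inj_onI)
    fix x y assume x: "x \<in> C" and y: "y \<in> C" and e: "?f x = ?f y"
    show "x = y"
    proof (rule ccontr)
      assume "x \<noteq> y"
      then have "r x y \<or> r y x" using tot x y by blast
      then show False
      proof
        assume "r x y"
        then have "?f x < ?f y" using pred_card_less[OF fin x y] irr tr x y by blast
        then show False using e by simp
      next
        assume "r y x"
        then have "?f y < ?f x" using pred_card_less[OF fin y x] irr tr x y by blast
        then show False using e by simp
      qed
    qed
  qed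
  have sub: "?f ` C \<subseteq> {0..<card C}"
  proof
    fix w assume "w \<in> ?f ` C"
    then obtain u where u: "u \<in> C" and w: "w = ?f u" by blast
    have "{v\<in>C. r v u} \<subseteq> C - {u}" using irr u by blast
    then have "?f u \<le> card (C - {u})" using fin by (simp add: card_mono)
    also have "\<dots> < card C" using fin u by (meson card_Diff1_less)
    finally show "w \<in> {0..<card C}" using w by simp
  qed
  have "card (?f ` C) = card C" using card_image[OF inj] .
  then have "?f ` C = {0..<card C}" using card_subset_eq[OF _ sub] by simp
  then show ?thesis using inj by (simp add: bij_betw_def)
qed

lemma pos_count:
  assumes "bij_betw f C {0..<card C}" and "finite C"
  shows "card {u\<in>C. f u < M} = min M (card C)"
proof -
  have inj: "inj_on f {u\<in>C. f u < M}" using assms(1) unfolding bij_betw_def by (auto intro: inj_on_subset)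
  have "f ` {u\<in>C. f u < M} = {0..<card C} \<inter> {..<M}" using assms(1) unfolding bij_betw_def by auto
  also have "\<dots> = {0..<min M (card C)}" by auto
  finally have "card (f ` {u\<in>C. f u < M}) = min M (card C)" by simp
  then show ?thesis using card_image[OF inj] by simp
qed

definition lexR :: "(nat \<times> nat) set" where "lexR = {(a, b). a < b}"

lemma lexR_trans: "Relation.trans lexR" by (auto simp: lexR_def Relation.trans_def)

lemma lex_irr: "(xs, xs) \<notin> lexord lexR"
  by (rule lexord_irreflexive) (simp add: lexR_def)

lemma lex_trans: "(xs, ys) \<in> lexord lexR \<Longrightarrow> (ys, zs) \<in> lexord lexR \<Longrightarrow> (xs, zs) \<in> lexord lexR"
  using lexord_trans lexR_trans by blast

lemma lex_lin: "xs \<noteq> ys \<Longrightarrow> (xs, ys) \<in> lexord lexR \<or> (ys, xs) \<in> lexord lexR"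
proof -
  assume "xs \<noteq> ys"
  moreover have "\<forall>a b. (a, b) \<in> lexR \<or> a = b \<or> (b, a) \<in> lexR" by (auto simp: lexR_def)
  ultimately show ?thesis using lexord_linear[of lexR xs ys] by blast
qed

lemma bin_prec_irr: "\<not> bin_prec w w"
  using lex_irr unfolding bin_prec_def lexR_def by simp

lemma bin_prec_trans: "bin_prec a b \<Longrightarrow> bin_prec b c \<Longrightarrow> bin_prec a c"
proof -
  assume ab: "bin_prec a b" and bc: "bin_prec b c"
  have ab': "length a < length b \<or> (length a = length b \<and> (map of_bool a :: nat list, map of_bool b) \<in> lexord lexR)"
    using ab unfolding bin_prec_def lexR_def .
  have bc': "length b < length c \<or> (length b = length c \<and> (map of_bool b :: nat list, map of_bool c) \<in> lexord lexR)"
    using bc unfolding bin_prec_def lexR_def .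
  have "length a < length c \<or> (length a = length c \<and> (map of_bool a :: nat list, map of_bool c) \<in> lexord lexR)"
  proof (cases "length a < length b")
    case True then show ?thesis using bc' by auto
  next
    case False
    then have e: "length a = length b" and l1: "(map of_bool a :: nat list, map of_bool b) \<in> lexord lexR" using ab' by auto
    show ?thesis
    proof (cases "length b < length c")
      case True then show ?thesis using e by simp
    next
      case False
      then have e2: "length b = length c" and l2: "(map of_bool b :: nat list, map of_bool c) \<in> lexord lexR" using bc' by auto
      have "(map of_bool a :: nat list, map of_bool c) \<in> lexord lexR" by (rule lex_trans[OF l1 l2])
      then show ?thesis using e e2 by simp
    qed
  qed
  then show ?thesis unfolding bin_prec_def lexR_def .
qed

lemma inj_of_bool_nat: "inj (of_bool :: bool \<Rightarrow> nat)"
  by (simp add: inj_def)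

lemma bin_prec_tot: "a \<noteq> b \<Longrightarrow> bin_prec a b \<or> bin_prec b a"
proof -
  assume ab: "a \<noteq> b"
  show ?thesis
  proof (cases "length a = length b")
    case True
    have ne: "map of_bool a \<noteq> (map of_bool b :: nat list)"
      using ab inj_map_eq_map[OF inj_of_bool_nat] by blast
    have "(map of_bool a :: nat list, map of_bool b) \<in> lexord lexR \<or> (map of_bool b :: nat list, map of_bool a) \<in> lexord lexR"
      by (rule lex_lin[OF ne])
    then show ?thesis using True unfolding bin_prec_def lexR_def by simp
  next
    case False
    then have "length a < length b \<or> length b < length a" by arith
    then show ?thesis unfolding bin_prec_def by blast
  qed
qed

lemma bin_prec_len: "bin_prec a b \<Longrightarrow> length a \<le> length b"
  unfolding bin_prec_def by linarith

lemma card_bool_len_lt: "card {xs :: bool list. length xs < l} = 2 ^ l - 1"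
proof (induction l)
  case 0 then show ?case by simp
next
  case (Suc l)
  have e: "{xs :: bool list. length xs < Suc l} = {xs. length xs < l} \<union> {xs. length xs = l}" by auto
  have f1: "finite {xs :: bool list. length xs < l}"
    using finite_lists_length_le[of "UNIV :: bool set" l] by (rule rev_finite_subset) auto
  have f2: "finite {xs :: bool list. length xs = l}"
    using finite_lists_length_eq[of "UNIV :: bool set" l] by simp
  have c2: "card {xs :: bool list. length xs = l} = 2 ^ l"
    using card_lists_length_eq[of "UNIV :: bool set" l] by simp
  have "card {xs :: bool list. length xs < Suc l} = card {xs :: bool list. length xs < l} + card {xs :: bool list. length xs = l}"
    unfolding e by (rule card_Un_disjoint[OF f1 f2]) auto
  also have "\<dots> = 2 ^ l - 1 + 2 ^ l" using Suc c2 by simp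
  also have "\<dots> = 2 ^ Suc l - 1" by simp
  finally show ?case .
qed

lemma card_bool_ne_len_lt: "card {xs :: bool list. xs \<noteq> [] \<and> length xs < l} = 2 ^ l - 2"
proof (cases l)
  case 0 then show ?thesis by simp
next
  case (Suc l')
  have "{xs :: bool list. xs \<noteq> [] \<and> length xs < l} = {xs. length xs < l} - {[]}" by auto
  moreover have "finite {xs :: bool list. length xs < l}"
    using finite_lists_length_le[of "UNIV :: bool set" l] by (rule rev_finite_subset) auto
  moreover have "[] \<in> {xs :: bool list. length xs < l}" using Suc by simp
  ultimately show ?thesis using card_bool_len_lt[of l] by (simp add: card_Diff_singleton)
qed

definition cb :: "bool list \<Rightarrow> nat" where
  "cb w = card {w'. w' \<noteq> [] \<and> bin_prec w' w}"

lemma cb_finite: "finite {w'. w' \<noteq> [] \<and> bin_prec w' w}"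
proof (rule finite_subset)
  show "{w'. w' \<noteq> [] \<and> bin_prec w' w} \<subseteq> {xs. set xs \<subseteq> UNIV \<and> length xs \<le> length w}"
    using bin_prec_len by auto
  show "finite {xs. set xs \<subseteq> (UNIV :: bool set) \<and> length xs \<le> length w}"
    by (rule finite_lists_length_le) simp
qed

lemma cb_lower: "2 ^ length w \<le> cb w + 2"
proof -
  have "{xs :: bool list. xs \<noteq> [] \<and> length xs < length w} \<subseteq> {w'. w' \<noteq> [] \<and> bin_prec w' w}"
  proof
    fix xs :: "bool list" assume "xs \<in> {xs. xs \<noteq> [] \<and> length xs < length w}"
    then have "xs \<noteq> []" "length xs < length w" by auto
    then show "xs \<in> {w'. w' \<noteq> [] \<and> bin_prec w' w}" unfolding bin_prec_def by simp
  qed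
  then have "card {xs :: bool list. xs \<noteq> [] \<and> length xs < length w} \<le> cb w"
    unfolding cb_def using cb_finite by (rule card_mono[rotated])
  then show ?thesis using card_bool_ne_len_lt[of "length w"] by simp
qed

lemma Xset_finite: "finite {w :: bool list. w \<noteq> [] \<and> length w \<le> L}"
  using finite_lists_length_le[of "UNIV :: bool set" L] by (rule rev_finite_subset) auto

lemma Xset_bij: "bij_betw (\<lambda>u. card {v\<in>{w :: bool list. w \<noteq> [] \<and> length w \<le> L}. bin_prec v u})
   {w :: bool list. w \<noteq> [] \<and> length w \<le> L} {0..<card {w :: bool list. w \<noteq> [] \<and> length w \<le> L}}"
  by (rule pos_bij[OF Xset_finite]) (use bin_prec_irr bin_prec_trans bin_prec_tot in blast)+

lemma Xset_pos: "w \<noteq> [] \<Longrightarrow> length w \<le> L \<Longrightarrow> card {v\<in>{w :: bool list. w \<noteq> [] \<and> length w \<le> L}. bin_prec v w} = cb w"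
proof -
  assume "w \<noteq> []" and lw: "length w \<le> L"
  have "{v\<in>{w :: bool list. w \<noteq> [] \<and> length w \<le> L}. bin_prec v w} = {w'. w' \<noteq> [] \<and> bin_prec w' w}"
  proof (rule set_eqI, rule iffI)
    fix v assume "v \<in> {v\<in>{w :: bool list. w \<noteq> [] \<and> length w \<le> L}. bin_prec v w}"
    then show "v \<in> {w'. w' \<noteq> [] \<and> bin_prec w' w}" by blast
  next
    fix v assume v: "v \<in> {w'. w' \<noteq> [] \<and> bin_prec w' w}"
    then have "length v \<le> length w" using bin_prec_len by blast
    then show "v \<in> {v\<in>{w :: bool list. w \<noteq> [] \<and> length w \<le> L}. bin_prec v w}" using v lw by simp
  qed
  then show ?thesis unfolding cb_def by simp
qed

lemma Xset_card: "card {w :: bool list. w \<noteq> [] \<and> length w \<le> L} = 2 ^ Suc L - 2"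
proof -
  have "{w :: bool list. w \<noteq> [] \<and> length w \<le> L} = {xs. xs \<noteq> [] \<and> length xs < Suc L}" by auto
  then show ?thesis using card_bool_ne_len_lt by simp
qed

lemma cb_unique: "\<exists>!w. w \<noteq> [] \<and> cb w = r"
proof -
  define X where "X = {w :: bool list. w \<noteq> [] \<and> length w \<le> Suc r}"
  define f where "f = (\<lambda>u. card {v\<in>X. bin_prec v u})"
  have "Suc r < 2 ^ Suc r" by (rule less_exp)
  then have "r < 2 ^ Suc (Suc r) - 2" by simp
  then have rX: "r \<in> {0..<card X}" using Xset_card[of "Suc r"] unfolding X_def by simp
  have im: "f ` X = {0..<card X}" unfolding f_def X_def by (rule bij_betw_imp_surj_on[OF Xset_bij])
  have "r \<in> f ` X" unfolding im by (rule rX)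
  then obtain w where w: "w \<in> X" and pw: "f w = r" by (rule imageE) simp
  have wne: "w \<noteq> []" and wl: "length w \<le> Suc r" using w unfolding X_def by auto
  have ex: "w \<noteq> [] \<and> cb w = r" using wne pw Xset_pos[OF wne wl] unfolding f_def X_def by simp
  have uniq: "w2 = w" if h: "w2 \<noteq> [] \<and> cb w2 = r" for w2
  proof -
    define M where "M = max (length w) (length w2)"
    define Y where "Y = {w :: bool list. w \<noteq> [] \<and> length w \<le> M}"
    have inj: "inj_on (\<lambda>u. card {v\<in>Y. bin_prec v u}) Y"
      unfolding Y_def by (rule bij_betw_imp_inj_on[OF Xset_bij])
    have wY: "w \<in> Y" and w2Y: "w2 \<in> Y" using ex h unfolding Y_def M_def by auto
    have c1: "card {v\<in>Y. bin_prec v w} = cb w" unfolding Y_def by (rule Xset_pos) (use wne in \<open>auto simp: M_def\<close>)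
    have c2: "card {v\<in>Y. bin_prec v w2} = cb w2" unfolding Y_def by (rule Xset_pos) (use h in \<open>auto simp: M_def\<close>)
    have "card {v\<in>Y. bin_prec v w2} = card {v\<in>Y. bin_prec v w}" using c1 c2 ex h by simp
    then show ?thesis using inj_onD[OF inj _ w2Y wY] by simp
  qed
  show ?thesis by (rule ex1I[where P="\<lambda>w. w \<noteq> [] \<and> cb w = r" and a=w, OF ex uniq])
qed

lemma code_len: "2 ^ length (code u) \<le> Defs.rank u + 2"
proof -
  have "code u \<noteq> [] \<and> cb (code u) = Defs.rank u"
    unfolding code_def cb_def[symmetric] by (rule theI') (rule cb_unique)
  then show ?thesis using cb_lower[of "code u"] by simp
qed

definition Cn :: "nat \<Rightarrow> nat \<Rightarrow> sym list set" where "Cn m k = Gset (\<lambda>l. l = m) k"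
definition NKs :: "nat \<Rightarrow> sym list set" where "NKs k = Gset (\<lambda>l. True) k"
definition As :: "nat \<Rightarrow> nat \<Rightarrow> sym list set" where "As n k = Gset (\<lambda>l. l < n) k"

lemma finite_Cn: "finite (Cn m k)" unfolding Cn_def by (rule Gset_finite)
lemma finite_As: "finite (As m k)" unfolding As_def by (rule Gset_finite)
lemma finite_NKs: "finite (NKs k)" unfolding NKs_def by (rule Gset_finite)

lemma Gset_small: "k < 2 \<Longrightarrow> Gset P k = {}"
proof -
  assume k: "k < 2"
  { fix u assume "u \<in> Gset P k"
    then have "admissible u" "kn u = k" by (auto simp: Gset_def)
    then have False using kn_bounds[of u] adm_nonempty[of u] k by linarith }
  then show ?thesis by blast
qed

lemma Gset_two: "Gset P 2 = (if P 1 then {[SA],[SB],[SC],[SD]} else {})"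
proof -
  have "u \<in> Gset P 2 \<longleftrightarrow> P 1 \<and> u \<in> {[SA],[SB],[SC],[SD]}" for u
  proof
    assume "u \<in> Gset P 2"
    then have a: "admissible u" and k: "kn u = 2" and p: "P (length u)" by (auto simp: Gset_def)
    then have "length u = 1" using kn_bounds[of u] adm_nonempty[of u] by (metis One_nat_def Suc_eq_plus1 le_add1 le_antisym le_less_Suc_eq length_0_conv less_one nat_less_le not_less_eq_eq one_add_one plus_1_eq_Suc)
    then obtain x where u: "u = [x]" by (cases u) auto
    have "x \<in> UNIV" by simp
    then have "x \<in> {SA,SB,SC,SD}" by (simp only: sym_UNIV)
    then show "P 1 \<and> u \<in> {[SA],[SB],[SC],[SD]}" using p u by auto
  next
    assume "P 1 \<and> u \<in> {[SA],[SB],[SC],[SD]}"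
    then show "u \<in> Gset P 2" by (auto simp: Gset_def)
  qed
  then show ?thesis by auto
qed

lemma Gset_cong: "(\<And>l. P l = Q l) \<Longrightarrow> Gset P k = Gset Q k"
  unfolding Gset_def by simp

lemma card_Cn_rec: "k \<ge> 3 \<Longrightarrow> card (Cn (Suc m) k) = card (Cn m (k-1)) + 2 * card (Cn m (k-2))"
  unfolding Cn_def using Gset_rec[of k "\<lambda>l. l = Suc m"] by simp

lemma card_As_rec: "k \<ge> 3 \<Longrightarrow> card (As (Suc n) k) = card (As n (k-1)) + 2 * card (As n (k-2))"
  unfolding As_def using Gset_rec[of k "\<lambda>l. l < Suc n"] by simp

lemma card_NKs_rec: "k \<ge> 3 \<Longrightarrow> card (NKs k) = card (NKs (k-1)) + 2 * card (NKs (k-2))"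
  unfolding NKs_def using Gset_rec[of k "\<lambda>l. True"] by simp

lemma card_NKs_2: "card (NKs 2) = 4"
  unfolding NKs_def Gset_two by simp

lemma card_NKs_small: "k < 2 \<Longrightarrow> card (NKs k) = 0"
  unfolding NKs_def using Gset_small by simp

lemma As_Suc: "As (Suc n) k = As n k \<union> Cn n k"
  unfolding As_def Cn_def Gset_def by auto

lemma card_As_Suc: "card (As (Suc n) k) = card (As n k) + card (Cn n k)"
proof -
  have "card (As n k \<union> Cn n k) = card (As n k) + card (Cn n k)"
    by (rule card_Un_disjoint[OF finite_As finite_Cn]) (auto simp: As_def Cn_def Gset_def)
  then show ?thesis using As_Suc by simp
qed

lemma card_As_0: "card (As 0 k) = 0"
  unfolding As_def Gset_def by simp

lemma card_Cn_0: "card (Cn 0 k) = 0"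
proof -
  have "Cn 0 k = {}" unfolding Cn_def Gset_def using adm_nonempty by auto
  then show ?thesis by simp
qed

lemma NK_pair: "k \<ge> 2 \<Longrightarrow> card (NKs (Suc k)) + card (NKs k) = 2 ^ Suc k"
proof (induction k rule: nat_induct_at_least)
  case base
  have "card (NKs 3) = card (NKs 2) + 2 * card (NKs 1)" using card_NKs_rec[of 3] by simp
  then show ?case using card_NKs_2 card_NKs_small[of 1] by simp
next
  case (Suc k)
  have "card (NKs (Suc (Suc k))) = card (NKs (Suc k)) + 2 * card (NKs k)"
    using card_NKs_rec[of "Suc (Suc k)"] Suc(1) by simp
  then show ?case using Suc(2) by simp
qed

definition Sl :: "nat \<Rightarrow> nat" where "Sl k = card {v. admissible v \<and> kn v < k}"

lemma Sl_finite: "finite {v. admissible v \<and> kn v < k}"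
proof (rule finite_subset)
  show "{v. admissible v \<and> kn v < k} \<subseteq> {xs. set xs \<subseteq> UNIV \<and> length xs \<le> k}"
  proof
    fix v assume "v \<in> {v. admissible v \<and> kn v < k}"
    then have "admissible v" "kn v < k" by auto
    then have "length v \<le> k" using kn_bounds[of v] adm_nonempty[of v] by linarith
    then show "v \<in> {xs. set xs \<subseteq> UNIV \<and> length xs \<le> k}" by simp
  qed
  show "finite {xs. set xs \<subseteq> (UNIV::sym set) \<and> length xs \<le> k}"
    by (rule finite_lists_length_le) (simp add: sym_UNIV)
qed

lemma Sl_Suc: "Sl (Suc k) = Sl k + card (NKs k)"
proof -
  have e: "{v. admissible v \<and> kn v < Suc k} = {v. admissible v \<and> kn v < k} \<union> NKs k"
    unfolding NKs_def Gset_def by auto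
  have "card ({v. admissible v \<and> kn v < k} \<union> NKs k) = Sl k + card (NKs k)"
    unfolding Sl_def by (rule card_Un_disjoint[OF Sl_finite finite_NKs]) (auto simp: NKs_def Gset_def)
  then show ?thesis unfolding Sl_def e .
qed

lemma Sl_2: "Sl 2 = 0"
proof -
  have "Sl 2 = Sl 0 + card (NKs 0) + card (NKs 1)" using Sl_Suc[of 0] Sl_Suc[of 1] by (simp add: numeral_2_eq_2)
  moreover have "Sl 0 = 0" unfolding Sl_def by simp
  ultimately show ?thesis using card_NKs_small by simp
qed

lemma Sl_closed: "k \<ge> 2 \<Longrightarrow> 2 * (2 ^ k - 2 - Sl k) = card (NKs k) \<and> Sl k + 2 \<le> 2 ^ k"
proof (induction k rule: nat_induct_at_least)
  case base then show ?case using Sl_2 card_NKs_2 by simp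
next
  case (Suc k)
  have p: "card (NKs (Suc k)) + card (NKs k) = 2 ^ Suc k" using NK_pair[OF Suc(1)] .
  have s: "Sl (Suc k) = Sl k + card (NKs k)" by (rule Sl_Suc)
  from Suc(2) have h1: "2 * (2 ^ k - 2 - Sl k) = card (NKs k)" and h2: "Sl k + 2 \<le> 2 ^ k" by auto
  have "Sl (Suc k) + 2 \<le> 2 ^ Suc k" using s h1 h2 p by simp
  moreover have "2 * (2 ^ Suc k - 2 - Sl (Suc k)) = card (NKs (Suc k))" using s h1 h2 p by simp
  ultimately show ?case by simp
qed

definition lexless :: "sym list \<Rightarrow> sym list \<Rightarrow> bool" where
  "lexless v u \<longleftrightarrow> (map sym_idx v, map sym_idx u) \<in> lexord lexR"

definition lexpos :: "nat \<Rightarrow> nat \<Rightarrow> sym list \<Rightarrow> nat" where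
  "lexpos n k u = card {v \<in> Cn n k. lexless v u}"

lemma inj_sym_idx: "inj sym_idx"
proof (rule injI)
  fix x y show "sym_idx x = sym_idx y \<Longrightarrow> x = y" by (cases x; cases y; simp)
qed

lemma lexless_irr: "\<not> lexless u u"
  unfolding lexless_def using lex_irr by blast

lemma lexless_trans: "lexless a b \<Longrightarrow> lexless b c \<Longrightarrow> lexless a c"
  unfolding lexless_def using lex_trans by blast

lemma lexless_tot: "a \<noteq> b \<Longrightarrow> lexless a b \<or> lexless b a"
proof -
  assume "a \<noteq> b"
  then have "map sym_idx a \<noteq> map sym_idx b" using inj_map_eq_map[OF inj_sym_idx] by blast
  then show ?thesis unfolding lexless_def by (rule lex_lin)
qed

lemma lexpos_bij: "bij_betw (lexpos n k) (Cn n k) {0..<card (Cn n k)}"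
proof -
  have "bij_betw (\<lambda>u. card {v \<in> Cn n k. lexless v u}) (Cn n k) {0..<card (Cn n k)}"
    by (rule pos_bij[OF finite_Cn]) (use lexless_irr lexless_trans lexless_tot in blast)+
  then show ?thesis unfolding lexpos_def .
qed

lemma code_prec_kn:
  assumes "admissible v" "admissible u"
  shows "code_prec v u \<longleftrightarrow> kn v < kn u \<or> (kn v = kn u \<and> (length v < length u \<or> (length v = length u \<and> lexless v u)))"
  unfolding code_prec_def lexless_def lexR_def K_kn[OF assms(1)] K_kn[OF assms(2)] by simp

lemma rank_le: assumes u: "u \<in> Cn n k" shows "Defs.rank u \<le> Sl k + card (As n k) + lexpos n k u"
proof -
  have au: "admissible u" and lu: "length u = n" and ku: "kn u = k" using u by (auto simp: Cn_def Gset_def)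
  have sub: "{v. admissible v \<and> code_prec v u} \<subseteq> ({v. admissible v \<and> kn v < k} \<union> As n k) \<union> {v \<in> Cn n k. lexless v u}"
  proof
    fix v assume "v \<in> {v. admissible v \<and> code_prec v u}"
    then have av: "admissible v" and c: "code_prec v u" by auto
    have "kn v < k \<or> (kn v = k \<and> (length v < n \<or> (length v = n \<and> lexless v u)))"
      using c code_prec_kn[OF av au] lu ku by simp
    then show "v \<in> ({v. admissible v \<and> kn v < k} \<union> As n k) \<union> {v \<in> Cn n k. lexless v u}"
      using av by (auto simp: As_def Cn_def Gset_def)
  qed
  have "Defs.rank u \<le> card (({v. admissible v \<and> kn v < k} \<union> As n k) \<union> {v \<in> Cn n k. lexless v u})"
    unfolding Defs.rank_def by (rule card_mono) (use sub Sl_finite finite_As finite_Cn in auto)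
  also have "\<dots> \<le> card ({v. admissible v \<and> kn v < k} \<union> As n k) + card {v \<in> Cn n k. lexless v u}"
    by (rule card_Un_le)
  also have "card ({v. admissible v \<and> kn v < k} \<union> As n k) \<le> Sl k + card (As n k)"
    unfolding Sl_def by (rule card_Un_le)
  finally show ?thesis unfolding lexpos_def by simp
qed

lemma code_prec_irr: "\<not> code_prec u u"
  unfolding code_prec_def using lex_irr[unfolded lexR_def] by simp

lemma rank_le2: assumes u: "u \<in> Cn n k" shows "Defs.rank u + 2 < 2 ^ Suc k"
proof -
  have au: "admissible u" and lu: "length u = n" and ku: "kn u = k" using u by (auto simp: Cn_def Gset_def)
  have k2: "k \<ge> 2" using kn_bounds[of u] adm_nonempty[OF au] ku by simp
  have sub: "{v. admissible v \<and> code_prec v u} \<subseteq> {v. admissible v \<and> kn v < Suc k} - {u}"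
  proof
    fix v assume "v \<in> {v. admissible v \<and> code_prec v u}"
    then have av: "admissible v" and c: "code_prec v u" by auto
    have "kn v \<le> k" using c code_prec_kn[OF av au] ku by auto
    moreover have "v \<noteq> u" using c code_prec_irr by auto
    ultimately show "v \<in> {v. admissible v \<and> kn v < Suc k} - {u}" using av by simp
  qed
  have "Defs.rank u \<le> card ({v. admissible v \<and> kn v < Suc k} - {u})"
    unfolding Defs.rank_def by (rule card_mono) (use sub Sl_finite in auto)
  also have "\<dots> < Sl (Suc k)" unfolding Sl_def by (rule card_Diff1_less[OF Sl_finite]) (use au ku in simp)
  finally have "Defs.rank u < Sl (Suc k)" .
  moreover have "Sl (Suc k) + 2 \<le> 2 ^ Suc k" using Sl_closed[of "Suc k"] k2 by simp
  ultimately show ?thesis by linarith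
qed

lemma code_le: assumes u: "u \<in> Cn n k"
  shows "real (length (code u)) \<le> real k - (if Defs.rank u + 2 < 2 ^ k then 1 else 0)"
proof -
  have a: "(2::nat) ^ length (code u) \<le> Defs.rank u + 2" by (rule code_len)
  have b: "Defs.rank u + 2 < 2 ^ Suc k" by (rule rank_le2[OF u])
  have c: "(2::nat) ^ length (code u) < 2 ^ Suc k" using a b by linarith
  have "length (code u) < Suc k" by (rule power_less_imp_less_exp[OF _ c]) simp
  then have l1: "length (code u) \<le> k" by simp
  show ?thesis
  proof (cases "Defs.rank u + 2 < 2 ^ k")
    case True
    then have c2: "(2::nat) ^ length (code u) < 2 ^ k" using a by linarith
    have "length (code u) < k" by (rule power_less_imp_less_exp[OF _ c2]) simp
    then show ?thesis using True by simp
  next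
    case False then show ?thesis using l1 by simp
  qed
qed

definition p :: "nat \<Rightarrow> nat \<Rightarrow> real" where "p n k = real (card (Cn n k)) / 2 ^ k"
definition tau :: "nat \<Rightarrow> real" where "tau k = real (card (NKs k)) / 2 ^ Suc k"
definition a :: "nat \<Rightarrow> nat \<Rightarrow> real" where "a n k = real (card (As n k)) / 2 ^ k"
definition d :: "nat \<Rightarrow> nat \<Rightarrow> real" where "d n k = tau k - a n k"

lemma count_good:
  assumes k2: "k \<ge> 2"
  shows "real (card {u \<in> Cn n k. Defs.rank u + 2 < 2 ^ k}) \<ge> 2 ^ k * max 0 (min (p n k) (d n k))"
proof -
  define x where "x = 2 ^ k * d n k"
  define M where "M = nat \<lceil>x\<rceil>"
  have sc: "2 * (2 ^ k - 2 - Sl k) = card (NKs k)" and sc2: "Sl k + 2 \<le> 2 ^ k" using Sl_closed[OF k2] by auto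
  have x_eq: "x = real (2 ^ k) - 2 - real (Sl k) - real (card (As n k))"
  proof -
    have "real (card (NKs k)) = 2 * (real (2 ^ k) - 2 - real (Sl k))"
    proof -
      have e1: "(2::nat) ^ k - 2 - Sl k = 2 ^ k - (2 + Sl k)" by simp
      have "real ((2::nat) ^ k - (2 + Sl k)) = real (2 ^ k) - real (2 + Sl k)"
        by (rule of_nat_diff) (use sc2 in simp)
      then have "real ((2::nat) ^ k - 2 - Sl k) = real (2 ^ k) - 2 - real (Sl k)" using e1 by simp
      moreover have "real (card (NKs k)) = 2 * real ((2::nat) ^ k - 2 - Sl k)" using sc by (metis of_nat_mult of_nat_numeral)
      ultimately show ?thesis by simp
    qed
    then show ?thesis unfolding x_def d_def tau_def a_def by (simp add: field_simps)
  qed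
  have sub: "{u \<in> Cn n k. lexpos n k u < M} \<subseteq> {u \<in> Cn n k. Defs.rank u + 2 < 2 ^ k}"
  proof
    fix u assume "u \<in> {u \<in> Cn n k. lexpos n k u < M}"
    then have u: "u \<in> Cn n k" and l: "lexpos n k u < M" by auto
    have "int (lexpos n k u) < \<lceil>x\<rceil>" using l unfolding M_def by (simp add: zless_nat_eq_int_zless)
    then have "real (lexpos n k u) < x" by (simp add: less_ceiling_iff)
    then have "real (Sl k + card (As n k) + lexpos n k u + 2) < real (2 ^ k)" using x_eq by simp
    then have "Sl k + card (As n k) + lexpos n k u + 2 < 2 ^ k" by (simp only: of_nat_less_iff)
    then show "u \<in> {u \<in> Cn n k. Defs.rank u + 2 < 2 ^ k}" using u rank_le[OF u] by simp
  qed
  have "card {u \<in> Cn n k. lexpos n k u < M} = min M (card (Cn n k))"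
    by (rule pos_count[OF lexpos_bij finite_Cn])
  then have "min M (card (Cn n k)) \<le> card {u \<in> Cn n k. Defs.rank u + 2 < 2 ^ k}"
    using card_mono[OF _ sub] finite_Cn by simp
  then have r: "real (min M (card (Cn n k))) \<le> real (card {u \<in> Cn n k. Defs.rank u + 2 < 2 ^ k})" by simp
  have "2 ^ k * max 0 (min (p n k) (d n k)) = max 0 (min (real (card (Cn n k))) x)"
    unfolding x_def p_def by (simp add: max_mult_distrib_left min_mult_distrib_left)
  also have "\<dots> \<le> real (min M (card (Cn n k)))"
  proof -
    have "x \<le> real M" unfolding M_def by linarith
    then show ?thesis by (simp add: min_def max_def)
  qed
  finally show ?thesis using r by linarith
qed

lemma class_sum:
  assumes k2: "k \<ge> 2"
  shows "(\<Sum>u\<in>Cn n k. Pstr u * real (length (code u))) \<le> real k * p n k - max 0 (min (p n k) (d n k))"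
proof -
  let ?G = "{u \<in> Cn n k. Defs.rank u + 2 < 2 ^ k}"
  have "(\<Sum>u\<in>Cn n k. Pstr u * real (length (code u))) \<le> (\<Sum>u\<in>Cn n k. (1/2) ^ k * (real k - of_bool (Defs.rank u + 2 < 2 ^ k)))"
  proof (rule sum_mono)
    fix u assume u: "u \<in> Cn n k"
    then have pu: "Pstr u = (1/2) ^ k" using Pstr_kn by (auto simp: Cn_def Gset_def)
    have "real (length (code u)) \<le> real k - of_bool (Defs.rank u + 2 < 2 ^ k)"
      using code_le[OF u] unfolding of_bool_def .
    then have "(1/2) ^ k * real (length (code u)) \<le> (1/2) ^ k * (real k - of_bool (Defs.rank u + 2 < 2 ^ k))"
      by (rule mult_left_mono) simp
    then show "Pstr u * real (length (code u)) \<le> (1/2) ^ k * (real k - of_bool (Defs.rank u + 2 < 2 ^ k))"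
      using pu by simp
  qed
  also have "\<dots> = (1/2) ^ k * (real k * real (card (Cn n k)) - real (card ?G))"
    using finite_Cn by (simp add: sum_distrib_left[symmetric] sum_subtractf Int_def)
  also have "\<dots> \<le> (1/2) ^ k * (real k * real (card (Cn n k)) - 2 ^ k * max 0 (min (p n k) (d n k)))"
    using count_good[OF k2, of n] by (intro mult_left_mono) auto
  also have "\<dots> = real k * p n k - max 0 (min (p n k) (d n k))"
    unfolding p_def by (simp add: field_simps power_one_over)
  finally show ?thesis .
qed

definition clampv :: "nat \<Rightarrow> nat \<Rightarrow> real" where
  "clampv n k = max 0 (min (p n k) (d n k))"

lemma Cn_small: "k < 2 \<Longrightarrow> Cn n k = {}"
  unfolding Cn_def by (rule Gset_small)

lemma EL_decomp: "{u. length u = n \<and> admissible u} = (\<Union>k\<in>{0..2*n}. Cn n k)"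
proof (rule set_eqI, rule iffI)
  fix u assume "u \<in> {u. length u = n \<and> admissible u}"
  then have "length u = n" "admissible u" by auto
  moreover then have "kn u \<le> 2 * n" using kn_bounds[of u] adm_nonempty by auto
  ultimately show "u \<in> (\<Union>k\<in>{0..2*n}. Cn n k)" by (auto simp: Cn_def Gset_def)
next
  fix u assume "u \<in> (\<Union>k\<in>{0..2*n}. Cn n k)"
  then show "u \<in> {u. length u = n \<and> admissible u}" by (auto simp: Cn_def Gset_def)
qed

lemma EL_le: "EL n \<le> (\<Sum>k\<in>{0..2*n}. real k * p n k - clampv n k)"
proof -
  have "EL n = (\<Sum>u\<in>(\<Union>k\<in>{0..2*n}. Cn n k). Pstr u * real (length (code u)))"
    unfolding EL_def EL_decomp ..
  also have "\<dots> = (\<Sum>k\<in>{0..2*n}. \<Sum>u\<in>Cn n k. Pstr u * real (length (code u)))"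
  proof (rule sum.UNION_disjoint)
    show "finite {0..2*n}" by simp
    show "\<forall>k\<in>{0..2*n}. finite (Cn n k)" using finite_Cn by blast
    show "\<forall>i\<in>{0..2*n}. \<forall>j\<in>{0..2*n}. i \<noteq> j \<longrightarrow> Cn n i \<inter> Cn n j = {}"
      by (auto simp: Cn_def Gset_def)
  qed
  also have "\<dots> \<le> (\<Sum>k\<in>{0..2*n}. real k * p n k - clampv n k)"
  proof (rule sum_mono)
    fix k assume "k \<in> {0..2*n}"
    show "(\<Sum>u\<in>Cn n k. Pstr u * real (length (code u))) \<le> real k * p n k - clampv n k"
    proof (cases "k \<ge> 2")
      case True then show ?thesis unfolding clampv_def by (rule class_sum)
    next
      case False
      then have "Cn n k = {}" using Cn_small by simp
      then show ?thesis unfolding clampv_def p_def by simp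
    qed
  qed
  finally show ?thesis .
qed

lemma card_Cn_1: "card (Cn 1 k) = (if k = 2 then 4 else 0)"
proof (cases "k = 2")
  case True then show ?thesis unfolding Cn_def by (simp add: Gset_two)
next
  case False
  have "Cn 1 k = {}"
  proof (cases "k < 2")
    case True then show ?thesis by (rule Cn_small)
  next
    case False2: False
    then have k3: "k \<ge> 3" using False by simp
    { fix u assume "u \<in> Cn 1 k"
      then have "admissible u" "length u = 1" "kn u = k" by (auto simp: Cn_def Gset_def)
      then obtain x where "u = [x]" by (cases u) auto
      then have False using \<open>kn u = k\<close> k3 by simp }
    then show ?thesis by blast
  qed
  then show ?thesis using False by simp
qed

lemma p_0: "p 0 k = 0" unfolding p_def using card_Cn_0 by simp
lemma p_1: "p 1 k = (if k = 2 then 1 else 0)" unfolding p_def using card_Cn_1 by simp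
lemma a_0: "a 0 k = 0" unfolding a_def using card_As_0 by simp

lemma p_rec: "k \<ge> 3 \<Longrightarrow> p (Suc m) k = (p m (k-1) + p m (k-2)) / 2"
proof -
  assume k: "k \<ge> 3"
  then obtain j where j: "k = 3 + j" using le_Suc_ex by blast
  have c: "card (Cn (Suc m) k) = card (Cn m (k-1)) + 2 * card (Cn m (k-2))" by (rule card_Cn_rec[OF k])
  have e1: "k - 1 = Suc (Suc j)" "k - 2 = Suc j" using j by auto
  show ?thesis unfolding p_def c e1 using j by (simp add: field_simps power_add)
qed

lemma p_nonneg: "p n k \<ge> 0" unfolding p_def by simp

lemma p_low: "k \<le> n \<Longrightarrow> p n k = 0"
proof -
  assume k: "k \<le> n"
  have "Cn n k = {}"
  proof -
    { fix u assume "u \<in> Cn n k"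
      then have "admissible u" "length u = n" "kn u = k" by (auto simp: Cn_def Gset_def)
      then have False using kn_bounds[of u] adm_nonempty[of u] k by linarith }
    then show ?thesis by blast
  qed
  then show ?thesis unfolding p_def by simp
qed

lemma p_high: "2 * n < k \<Longrightarrow> p n k = 0"
proof -
  assume k: "2 * n < k"
  have "Cn n k = {}"
  proof -
    { fix u assume "u \<in> Cn n k"
      then have "admissible u" "length u = n" "kn u = k" by (auto simp: Cn_def Gset_def)
      then have False using kn_bounds[of u] adm_nonempty[of u] k by linarith }
    then show ?thesis by blast
  qed
  then show ?thesis unfolding p_def by simp
qed

lemma p_rec_all: "n \<ge> 1 \<Longrightarrow> p (Suc n) k = (p n (k-1) + p n (k-2)) / 2"
proof (cases "k \<ge> 3")
  case True then show ?thesis by (rule p_rec)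
next
  case False
  assume n: "n \<ge> 1"
  then have "p (Suc n) k = 0" using False by (intro p_low) simp
  moreover have "p n (k-1) = 0" "p n (k-2) = 0" using False n by (auto intro: p_low)
  ultimately show ?thesis by simp
qed

lemma pow_split: "k \<ge> 3 \<Longrightarrow> (2::real) ^ k = 2 * 2 ^ (k-1) \<and> (2::real) ^ k = 4 * 2 ^ (k-2)"
proof -
  assume "k \<ge> 3"
  then obtain j where j: "k = 3 + j" using le_Suc_ex by blast
  then show ?thesis by (simp add: power_add)
qed

lemma tau_rec: "k \<ge> 3 \<Longrightarrow> tau k = (tau (k-1) + tau (k-2)) / 2"
proof -
  assume k: "k \<ge> 3"
  then obtain j where j: "k = 3 + j" using le_Suc_ex by blast
  have e1: "k - 1 = Suc (Suc j)" "k - 2 = Suc j" using j by auto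
  show ?thesis unfolding tau_def card_NKs_rec[OF k] e1 using j by (simp add: field_simps power_add)
qed

lemma a_rec: "k \<ge> 3 \<Longrightarrow> a (Suc n) k = (a n (k-1) + a n (k-2)) / 2"
proof -
  assume k: "k \<ge> 3"
  then obtain j where j: "k = 3 + j" using le_Suc_ex by blast
  have e1: "k - 1 = Suc (Suc j)" "k - 2 = Suc j" using j by auto
  show ?thesis unfolding a_def card_As_rec[OF k] e1 using j by (simp add: field_simps power_add)
qed

lemma a_Suc: "a (Suc n) k = a n k + p n k"
  unfolding a_def p_def card_As_Suc by (simp add: add_divide_distrib)

lemma d_rec: "k \<ge> 3 \<Longrightarrow> d (Suc n) k = (d n (k-1) + d n (k-2)) / 2"
  unfolding d_def using tau_rec a_rec by simp

lemma d_Suc: "d (Suc n) k = d n k - p n k"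
  unfolding d_def using a_Suc by simp

lemma d_mono: "n \<le> m \<Longrightarrow> d m k \<le> d n k"
proof (induction m rule: dec_induct)
  case base then show ?case by simp
next
  case (step m) then show ?case using d_Suc[of m k] p_nonneg[of m k] by simp
qed

lemma card_NKs_3: "card (NKs 3) = 4"
  using card_NKs_rec[of 3] card_NKs_2 card_NKs_small[of 1] by simp

lemma card_NKs_4: "card (NKs 4) = 12"
  using card_NKs_rec[of 4] card_NKs_3 card_NKs_2 by simp

lemma d_2_3: "d 2 3 = 1/4"
proof -
  have "a 2 3 = a 0 3 + p 0 3 + p 1 3" using a_Suc[of 1 3] a_Suc[of 0 3] by (simp add: numeral_2_eq_2)
  then have "a 2 3 = 0" using a_0 p_0 p_1 by simp
  then show ?thesis unfolding d_def tau_def using card_NKs_3 by simp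
qed

lemma d_2_4: "d 2 4 = 3/8"
proof -
  have "a 2 4 = a 0 4 + p 0 4 + p 1 4" using a_Suc[of 1 4] a_Suc[of 0 4] by (simp add: numeral_2_eq_2)
  then have "a 2 4 = 0" using a_0 p_0 p_1 by simp
  then show ?thesis unfolding d_def tau_def using card_NKs_4 by simp
qed

definition pc :: "nat \<Rightarrow> nat \<Rightarrow> real" where
  "pc n k = (if 1 \<le> n \<and> n + 1 \<le> k then real ((n - 1) choose (k - n - 1)) / 2 ^ (n - 1) else 0)"

lemma pc_rec: "n \<ge> 1 \<Longrightarrow> k \<ge> 3 \<Longrightarrow> pc (Suc n) k = (pc n (k-1) + pc n (k-2)) / 2"
proof -
  assume n: "n \<ge> 1" and k: "k \<ge> 3"
  then obtain n' where n': "n = Suc n'" by (cases n) auto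
  consider (lo) "k < n + 2" | (eq) "k = n + 2" | (hi) "k \<ge> n + 3" by linarith
  then show ?thesis
  proof cases
    case lo then show ?thesis unfolding pc_def by auto
  next
    case eq then show ?thesis unfolding pc_def using n' by simp
  next
    case hi
    then obtain j where j: "k = n + 3 + j" using le_Suc_ex by blast
    have l: "pc (Suc n) k = real (n choose (Suc j)) / 2 ^ n" unfolding pc_def using j by simp
    have r1: "pc n (k-1) = real (n' choose (Suc j)) / 2 ^ n'" unfolding pc_def using j n' by simp
    have r2: "pc n (k-2) = real (n' choose j) / 2 ^ n'" unfolding pc_def using j n' by simp
    have "real (n choose (Suc j)) = real (n' choose j) + real (n' choose Suc j)" using n' by simp
    then show ?thesis unfolding l r1 r2 using n' by (simp add: field_simps)
  qed
qed

lemma p_closed: "p n k = pc n k"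
proof (induction n arbitrary: k)
  case 0 then show ?case unfolding pc_def using p_0 by simp
next
  case (Suc n)
  show ?case
  proof (cases "n = 0")
    case True then show ?thesis unfolding pc_def using p_1 by auto
  next
    case False
    then have n: "n \<ge> 1" by simp
    show ?thesis
    proof (cases "k \<ge> 3")
      case True
      have "p (Suc n) k = (p n (k-1) + p n (k-2)) / 2" by (rule p_rec[OF True])
      also have "\<dots> = (pc n (k-1) + pc n (k-2)) / 2" using Suc.IH by simp
      also have "\<dots> = pc (Suc n) k" using pc_rec[OF n True] by simp
      finally show ?thesis .
    next
      case False
      then have "p (Suc n) k = 0" using n by (intro p_low) simp
      moreover have "pc (Suc n) k = 0" unfolding pc_def using False n by simp
      ultimately show ?thesis by simp
    qed
  qed
qed

definition bb :: "nat \<Rightarrow> real" where "bb t = p (2 * t) (3 * t + 1)"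

lemma bb_closed: "t \<ge> 1 \<Longrightarrow> bb t = real ((2 * t - 1) choose t) / 2 ^ (2 * t - 1)"
  unfolding bb_def p_closed pc_def by simp

lemma p_diag0: "t \<ge> 1 \<Longrightarrow> p (2 * t) (3 * t) = bb t"
proof -
  assume t: "t \<ge> 1"
  have "p (2 * t) (3 * t) = real ((2 * t - 1) choose (t - 1)) / 2 ^ (2 * t - 1)"
    unfolding p_closed pc_def using t by simp
  also have "(2 * t - 1) choose (t - 1) = (2 * t - 1) choose t"
  proof -
    have "(2 * t - 1) choose (t - 1) = (2 * t - 1) choose ((2 * t - 1) - (t - 1))"
      by (rule binomial_symmetric) simp
    moreover have "(2 * t - 1) - (t - 1) = t" using t by simp
    ultimately show ?thesis by simp
  qed
  finally show ?thesis using bb_closed[OF t] by simp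
qed

lemma p_diag2: "t \<ge> 1 \<Longrightarrow> p (2 * t + 1) (3 * t + 2) = bb t"
proof -
  assume t: "t \<ge> 1"
  have "p (Suc (2 * t)) (3 * t + 2) = (p (2 * t) (3 * t + 1) + p (2 * t) (3 * t)) / 2"
    using p_rec[of "3 * t + 2" "2 * t"] t by simp
  then show ?thesis using p_diag0[OF t] unfolding bb_def by simp
qed

lemma bb_1: "bb 1 = 1/2"
  using bb_closed[of 1] by simp

lemma bb_step: "t \<ge> 1 \<Longrightarrow> bb (Suc t) = bb t * (2 * t + 1) / (2 * t + 2)"
proof -
  assume t: "t \<ge> 1"
  then obtain s where s: "t = Suc s" by (cases t) auto
  have b1: "bb t = real ((2 * s + 1) choose (s + 1)) / 2 ^ (2 * s + 1)" using bb_closed[OF t] s by (simp del: binomial_Suc_Suc)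
  have b2: "bb (Suc t) = real ((2 * s + 3) choose (s + 2)) / 2 ^ (2 * s + 3)" using bb_closed[of "Suc t"] s
    by (simp del: binomial_Suc_Suc add: numeral_3_eq_3 numeral_2_eq_2)
  have e1: "(s + 2) * ((2 * s + 3) choose (s + 2)) = (2 * s + 3) * ((2 * s + 2) choose (s + 1))"
    using Suc_times_binomial[of "s + 1" "2 * s + 2"] by (simp del: binomial_Suc_Suc add: numeral_3_eq_3 numeral_2_eq_2)
  have e2: "(2 * s + 2) choose (s + 1) = 2 * ((2 * s + 1) choose (s + 1))"
  proof -
    have "(2 * s + 2) choose (s + 1) = ((2 * s + 1) choose s) + ((2 * s + 1) choose (s + 1))"
      using binomial_Suc_Suc[of "2 * s + 1" s] by simp
    moreover have "(2 * s + 1) choose s = (2 * s + 1) choose (s + 1)"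
    proof -
      have "(2 * s + 1) choose s = (2 * s + 1) choose ((2 * s + 1) - s)" by (rule binomial_symmetric) simp
      then show ?thesis by (simp add: Suc_diff_le)
    qed
    ultimately show ?thesis by simp
  qed
  define A where "A = real ((2 * s + 3) choose (s + 2))"
  define B where "B = real ((2 * s + 1) choose (s + 1))"
  have hA: "real (s + 2) * A = real (2 * s + 3) * 2 * B"
    unfolding A_def B_def using e1 e2 by (metis of_nat_mult mult.assoc of_nat_numeral)
  have b1': "bb t = B / 2 ^ (2 * s + 1)" using b1 unfolding B_def .
  have b2': "bb (Suc t) = A / 2 ^ (2 * s + 3)" using b2 unfolding A_def .
  have m: "bb (Suc t) * (2 * real t + 2) = bb t * (2 * real t + 1)"
  proof -
    have "bb (Suc t) * (2 * real t + 2) = 2 * (real (s + 2) * A) / 2 ^ (2 * s + 3)"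
      unfolding b2' using s by (simp add: field_simps)
    also have "\<dots> = 2 * (real (2 * s + 3) * 2 * B) / 2 ^ (2 * s + 3)" using hA by simp
    also have "\<dots> = bb t * (2 * real t + 1)" unfolding b1' using s by (simp add: field_simps power_add)
    finally show ?thesis .
  qed
  have pos: "2 * real t + 2 > 0" by simp
  show ?thesis using m pos by (simp add: eq_divide_eq add.commute)
qed

lemma bb_pos: "t \<ge> 1 \<Longrightarrow> bb t > 0"
proof (induction t rule: nat_induct_at_least)
  case base then show ?case using bb_1 by simp
next
  case (Suc t) then show ?case using bb_step[OF Suc(1)] by simp
qed

lemma bb_le: "t \<ge> 1 \<Longrightarrow> bb t \<le> 1/2"
proof (induction t rule: nat_induct_at_least)
  case base then show ?case using bb_1 by simp
next
  case (Suc t)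
  have "bb (Suc t) = bb t * ((2 * t + 1) / (2 * t + 2))" using bb_step[OF Suc(1)] by simp
  also have "\<dots> \<le> bb t * 1" using bb_pos[OF Suc(1)] by (intro mult_left_mono) auto
  finally show ?case using Suc by simp
qed

lemma d_rec': "k \<ge> 3 \<Longrightarrow> k1 = k - 1 \<Longrightarrow> k2 = k - 2 \<Longrightarrow> m = Suc n \<Longrightarrow> d m k = (d n k1 + d n k2) / 2"
  using d_rec by simp

lemma p_rec': "k \<ge> 3 \<Longrightarrow> k1 = k - 1 \<Longrightarrow> k2 = k - 2 \<Longrightarrow> m = Suc n \<Longrightarrow> p m k = (p n k1 + p n k2) / 2"
  using p_rec by simp

lemma d_Suc': "m = Suc n \<Longrightarrow> d m k = d n k - p n k"
  using d_Suc by simp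

definition X :: "nat \<Rightarrow> real" where "X t = d (2 * t) (3 * t)"

lemma diag_step:
  assumes t: "t \<ge> 1" and Y: "d (2 * t) (3 * t + 1) = bb t - X t / 2"
  shows "X (Suc t) = bb t / 4 - X t / 8 \<and> d (2 * Suc t) (3 * Suc t + 1) = bb (Suc t) - X (Suc t) / 2"
proof -
  define x where "x = X t"
  define b where "b = bb t"
  define c where "c = p (2 * t + 1) (3 * t + 3)"
  have x0: "d (2 * t) (3 * t) = x" unfolding x_def X_def ..
  have y0: "d (2 * t) (3 * t + 1) = b - x / 2" using Y unfolding x_def b_def .
  have W: "d (2 * t + 1) (3 * t + 2) = (d (2 * t) (3 * t + 1) + d (2 * t) (3 * t)) / 2"
    by (rule d_rec') (use t in simp_all)
  have D1: "d (2 * t + 1) (3 * t + 1) = d (2 * t) (3 * t + 1) - b"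
    using d_Suc[of "2 * t" "3 * t + 1"] unfolding b_def bb_def by simp
  have X': "d (2 * t + 2) (3 * t + 3) = (d (2 * t + 1) (3 * t + 2) + d (2 * t + 1) (3 * t + 1)) / 2"
    by (rule d_rec') simp_all
  have D3: "d (2 * t + 2) (3 * t + 3) = d (2 * t + 1) (3 * t + 3) - c"
    unfolding c_def by (rule d_Suc') simp
  have Y': "d (2 * t + 2) (3 * t + 4) = (d (2 * t + 1) (3 * t + 3) + d (2 * t + 1) (3 * t + 2)) / 2"
    by (rule d_rec') simp_all
  have B': "bb (Suc t) = (c + b) / 2"
  proof -
    have "bb (Suc t) = p (Suc (2 * t + 1)) (3 * t + 4)" unfolding bb_def by (simp add: add.commute)
    also have "\<dots> = (p (2 * t + 1) (3 * t + 3) + p (2 * t + 1) (3 * t + 2)) / 2"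
      by (rule p_rec') simp_all
    finally show ?thesis using p_diag2[OF t] unfolding c_def b_def by simp
  qed
  have XS: "X (Suc t) = d (2 * t + 2) (3 * t + 3)" unfolding X_def by (simp add: add.commute)
  have e2: "d (2 * Suc t) (3 * Suc t + 1) = d (2 * t + 2) (3 * t + 4)" by (simp add: add.commute)
  define w where "w = d (2 * t + 1) (3 * t + 2)"
  define y where "y = d (2 * t) (3 * t + 1)"
  define d1 where "d1 = d (2 * t + 1) (3 * t + 1)"
  define x' where "x' = d (2 * t + 2) (3 * t + 3)"
  define d3 where "d3 = d (2 * t + 1) (3 * t + 3)"
  define y' where "y' = d (2 * t + 2) (3 * t + 4)"
  define b' where "b' = bb (Suc t)"
  have q1: "w = (y + x) / 2" using W x0 unfolding w_def y_def by simp
  have q2: "d1 = y - b" using D1 unfolding d1_def y_def by simp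
  have q3: "x' = (w + d1) / 2" using X' unfolding x'_def w_def d1_def by simp
  have q4: "x' = d3 - c" using D3 unfolding x'_def d3_def by simp
  have q5: "y' = (d3 + w) / 2" using Y' unfolding y'_def d3_def w_def by simp
  have q6: "b' = (c + b) / 2" using B' unfolding b'_def by simp
  have q7: "y = b - x / 2" using y0 unfolding y_def by simp
  have s1: "x' = b / 4 - x / 8" using q1 q2 q3 q7 by (simp add: field_simps)
  have s2: "y' = b' - x' / 2" using q1 q2 q3 q4 q5 q6 q7 by (simp add: field_simps)
  have r1: "X (Suc t) = b / 4 - x / 8" using XS s1 unfolding x'_def by simp
  have r2: "d (2 * Suc t) (3 * Suc t + 1) = bb (Suc t) - X (Suc t) / 2"
    using e2 s2 XS unfolding y'_def b'_def x'_def by simp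
  show ?thesis using r1 r2 unfolding x_def b_def by simp
qed

lemma diag_all: "t \<ge> 1 \<Longrightarrow> d (2 * t) (3 * t + 1) = bb t - X t / 2 \<and> X (Suc t) = bb t / 4 - X t / 8"
proof (induction t rule: nat_induct_at_least)
  case base
  have y: "d (2 * 1) (3 * 1 + 1) = bb 1 - X 1 / 2" unfolding X_def using d_2_3 d_2_4 bb_1 by simp
  then show ?case using diag_step[OF _ y] by simp
next
  case (Suc t)
  then have y: "d (2 * Suc t) (3 * Suc t + 1) = bb (Suc t) - X (Suc t) / 2" using diag_step[of t] by simp
  then show ?case using diag_step[OF _ y] by simp
qed

lemma X_1: "X 1 = 1/4" unfolding X_def using d_2_3 by simp

lemma X_bounds: "t \<ge> 1 \<Longrightarrow> 0 \<le> X t \<and> X t \<le> bb t"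
proof (induction t rule: nat_induct_at_least)
  case base then show ?case using X_1 bb_1 by simp
next
  case (Suc t)
  have xs: "X (Suc t) = bb t / 4 - X t / 8" using diag_all[OF Suc(1)] by simp
  have "bb (Suc t) = bb t * (2 * t + 1) / (2 * t + 2)" by (rule bb_step[OF Suc(1)])
  moreover have "bb t * (2 * t + 1) / (2 * t + 2) \<ge> bb t / 4"
  proof -
    have e: "bb t * (2 * t + 1) / (2 * t + 2) = bb t * ((2 * t + 1) / (2 * t + 2))" by simp
    have "(2 * real t + 1) / (2 * real t + 2) \<ge> 1 / 4" by (simp add: field_simps)
    then have "bb t * (1 / 4) \<le> bb t * ((2 * t + 1) / (2 * t + 2))"
      using bb_pos[OF Suc(1)] by (intro mult_left_mono) auto
    then show ?thesis using e by simp
  qed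
  ultimately show ?case using xs Suc(2) by simp
qed

lemma Y_val: "t \<ge> 1 \<Longrightarrow> d (2 * t) (3 * t + 1) = bb t - X t / 2" using diag_all by simp

lemma W_val: "t \<ge> 1 \<Longrightarrow> d (2 * t + 1) (3 * t + 2) = bb t / 2 + X t / 4"
proof -
  assume t: "t \<ge> 1"
  have "d (2 * t + 1) (3 * t + 2) = (d (2 * t) (3 * t + 1) + d (2 * t) (3 * t)) / 2"
    by (rule d_rec') (use t in simp_all)
  then show ?thesis using Y_val[OF t] unfolding X_def by simp
qed

lemma dpos_base: "s \<ge> 1 \<Longrightarrow> d (2 * s) (3 * s) \<ge> 0 \<and> d (2 * s) (3 * s + 1) \<ge> 0 \<and> d (2 * s + 1) (3 * s + 2) \<ge> 0"
proof -
  assume s: "s \<ge> 1"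
  have "0 \<le> X s" "X s \<le> bb s" using X_bounds[OF s] by auto
  then show ?thesis using Y_val[OF s] W_val[OF s] unfolding X_def by simp
qed

lemma dpos: assumes t: "t \<ge> 1" and k: "3 * t + 2 \<le> k" and n: "n \<le> 2 * t + 1" shows "d n k \<ge> 0"
proof -
  define s where "s = k div 3"
  have ks: "k = 3 * s + k mod 3" unfolding s_def by simp
  have s1: "s \<ge> 1" using k t unfolding s_def by linarith
  consider (r0) "k mod 3 = 0" | (r1) "k mod 3 = 1" | (r2) "k mod 3 = 2" by linarith
  then show ?thesis
  proof cases
    case r0
    then have e: "k = 3 * s" using ks by simp
    then have "n \<le> 2 * s" using k n by linarith
    then have "d (2 * s) (3 * s) \<le> d n (3 * s)" by (rule d_mono)
    then show ?thesis using dpos_base[OF s1] e by simp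
  next
    case r1
    then have e: "k = 3 * s + 1" using ks by simp
    then have "n \<le> 2 * s" using k n by linarith
    then have "d (2 * s) (3 * s + 1) \<le> d n (3 * s + 1)" by (rule d_mono)
    then show ?thesis using dpos_base[OF s1] e by simp
  next
    case r2
    then have e: "k = 3 * s + 2" using ks by simp
    then have "n \<le> 2 * s + 1" using k n by linarith
    then have "d (2 * s + 1) (3 * s + 2) \<le> d n (3 * s + 2)" by (rule d_mono)
    then show ?thesis using dpos_base[OF s1] e by simp
  qed
qed

lemma dpos2: assumes k: "3 * t + 3 \<le> k" and n: "n \<le> 2 * t + 2" shows "d n k \<ge> 0"
proof -
  define s where "s = k div 3"
  have ks: "k = 3 * s + k mod 3" unfolding s_def by simp
  have s1: "s \<ge> 1" using k unfolding s_def by simp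
  consider (r0) "k mod 3 = 0" | (r1) "k mod 3 = 1" | (r2) "k mod 3 = 2" by linarith
  then show ?thesis
  proof cases
    case r0
    then have e: "k = 3 * s" using ks by simp
    then have "n \<le> 2 * s" using k n by linarith
    then have "d (2 * s) (3 * s) \<le> d n (3 * s)" by (rule d_mono)
    then show ?thesis using dpos_base[OF s1] e by simp
  next
    case r1
    then have e: "k = 3 * s + 1" using ks by simp
    then have "n \<le> 2 * s" using k n by linarith
    then have "d (2 * s) (3 * s + 1) \<le> d n (3 * s + 1)" by (rule d_mono)
    then show ?thesis using dpos_base[OF s1] e by simp
  next
    case r2
    then have e: "k = 3 * s + 2" using ks by simp
    then have "n \<le> 2 * s + 1" using k n by linarith
    then have "d (2 * s + 1) (3 * s + 2) \<le> d n (3 * s + 2)" by (rule d_mono)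
    then show ?thesis using dpos_base[OF s1] e by simp
  qed
qed

lemma clamp_nonneg: "clampv n k \<ge> 0" unfolding clampv_def by simp

lemma clamp_full: "d (Suc n) k \<ge> 0 \<Longrightarrow> clampv n k = p n k"
  unfolding clampv_def using d_Suc[of n k] p_nonneg[of n k] by simp

lemma clamp_part: "d (Suc n) k \<le> 0 \<Longrightarrow> clampv n k \<ge> d n k"
  unfolding clampv_def using d_Suc[of n k] by simp

definition Sg :: "nat \<Rightarrow> (nat \<Rightarrow> real) \<Rightarrow> real" where
  "Sg n g = (\<Sum>k<2 * n + 1. g k * p n k)"

lemma shift1: "h 0 = 0 \<Longrightarrow> (\<Sum>k<Suc B. g k * h (k - 1)) = (\<Sum>j<B. g (j + 1) * (h j :: real))"
  unfolding sum.lessThan_Suc_shift by simp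

lemma shift2: "h 0 = 0 \<Longrightarrow> (\<Sum>k<Suc (Suc B). g k * h (k - 2)) = (\<Sum>j<B. g (j + 2) * (h j :: real))"
  unfolding sum.lessThan_Suc_shift by (simp add: numeral_2_eq_2)

lemma Sg_shift: "n \<ge> 1 \<Longrightarrow> Sg (Suc n) g = (Sg n (\<lambda>j. g (j + 1)) + Sg n (\<lambda>j. g (j + 2))) / 2"
proof -
  assume n: "n \<ge> 1"
  have ee: "2 * Suc n + 1 = Suc (Suc (2 * n + 1))" by simp
  have "Sg (Suc n) g = (\<Sum>k<Suc (Suc (2 * n + 1)). g k * ((p n (k - 1) + p n (k - 2)) / 2))"
    unfolding Sg_def ee by (rule sum.cong) (simp_all only: p_rec_all[OF n])
  also have "\<dots> = ((\<Sum>k<Suc (Suc (2 * n + 1)). g k * p n (k - 1)) + (\<Sum>k<Suc (Suc (2 * n + 1)). g k * p n (k - 2))) / 2"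
    by (simp add: sum.distrib sum_divide_distrib distrib_left add_divide_distrib)
  also have "(\<Sum>k<Suc (Suc (2 * n + 1)). g k * p n (k - 1)) = (\<Sum>j<Suc (2 * n + 1). g (j + 1) * p n j)"
    by (rule shift1) (simp add: p_low)
  also have "\<dots> = (\<Sum>j<2 * n + 1. g (j + 1) * p n j)" using p_high[of n "2 * n + 1"] by simp
  also have "(\<Sum>k<Suc (Suc (2 * n + 1)). g k * p n (k - 2)) = (\<Sum>j<2 * n + 1. g (j + 2) * p n j)"
    by (rule shift2) (simp add: p_low)
  finally show ?thesis unfolding Sg_def by simp
qed

lemma Sg_add: "Sg n (\<lambda>k. f k + g k) = Sg n f + Sg n g"
  unfolding Sg_def by (simp add: distrib_right sum.distrib)

lemma Sg_cmult: "Sg n (\<lambda>k. c * f k) = c * Sg n f"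
  unfolding Sg_def by (simp only: sum_distrib_left mult.assoc)

lemma Sg_delta: "j < 2 * n + 1 \<Longrightarrow> Sg n (\<lambda>k. of_bool (k = j)) = p n j"
proof -
  assume j: "j < 2 * n + 1"
  have "Sg n (\<lambda>k. of_bool (k = j)) = (\<Sum>k<2 * n + 1. if k = j then p n k else 0)"
    unfolding Sg_def by (intro sum.cong) auto
  also have "\<dots> = p n j" using j by (simp add: sum.delta)
  finally show ?thesis .
qed

lemma mass: "n \<ge> 1 \<Longrightarrow> Sg n (\<lambda>_. 1) = 1"
proof (induction n rule: nat_induct_at_least)
  case base
  have "Sg 1 (\<lambda>_. 1) = p 1 0 + p 1 1 + p 1 2" unfolding Sg_def by (simp add: numeral_3_eq_3 numeral_2_eq_2)
  then show ?case using p_1 by simp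
next
  case (Suc n) then show ?case using Sg_shift[OF Suc(1), of "\<lambda>_. 1"] by simp
qed

lemma mean: "n \<ge> 1 \<Longrightarrow> Sg n real = 3/2 * real n + 1/2"
proof (induction n rule: nat_induct_at_least)
  case base
  have "Sg 1 real = 0 * p 1 0 + 1 * p 1 1 + 2 * p 1 2" unfolding Sg_def by (simp add: numeral_3_eq_3 numeral_2_eq_2)
  then show ?case using p_1 by simp
next
  case (Suc n)
  have e1: "Sg n (\<lambda>j. real (j + 1)) = Sg n real + 1"
    using Sg_add[of n real "\<lambda>_. 1"] mass[OF Suc(1)] by (simp add: add.commute)
  have e2: "Sg n (\<lambda>j. real (j + 2)) = Sg n real + 2"
    using Sg_add[of n real "\<lambda>_. 2"] Sg_cmult[of n 2 "\<lambda>_. 1"] mass[OF Suc(1)] by (simp add: add.commute)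
  show ?case using Sg_shift[OF Suc(1), of real] e1 e2 Suc(2) by (simp add: field_simps)
qed

definition Tl :: "nat \<Rightarrow> nat \<Rightarrow> real" where "Tl n lo = Sg n (\<lambda>k. of_bool (lo \<le> k))"

lemma Tl_shift: "n \<ge> 1 \<Longrightarrow> lo \<ge> 2 \<Longrightarrow> Tl (Suc n) lo = (Tl n (lo - 1) + Tl n (lo - 2)) / 2"
proof -
  assume n: "n \<ge> 1" and lo: "lo \<ge> 2"
  have f1: "(\<lambda>j. of_bool (lo \<le> j + 1) :: real) = (\<lambda>j. of_bool (lo - 1 \<le> j))" using lo by (intro ext) auto
  have f2: "(\<lambda>j. of_bool (lo \<le> j + 2) :: real) = (\<lambda>j. of_bool (lo - 2 \<le> j))" using lo by (intro ext) auto
  show ?thesis unfolding Tl_def using Sg_shift[OF n, of "\<lambda>k. of_bool (lo \<le> k)"] f1 f2 by simp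
qed

lemma Tl_split: "lo < 2 * n + 1 \<Longrightarrow> Tl n lo = p n lo + Tl n (Suc lo)"
proof -
  assume lo: "lo < 2 * n + 1"
  have f: "(\<lambda>k. of_bool (lo \<le> k) :: real) = (\<lambda>k. of_bool (k = lo) + of_bool (Suc lo \<le> k))" by (intro ext) auto
  show ?thesis unfolding Tl_def f Sg_add Sg_delta[OF lo] ..
qed

lemma Tl_2_5: "Tl 2 5 = 0"
  unfolding Tl_def Sg_def by simp

lemma tails: "t \<ge> 1 \<Longrightarrow> Tl (2 * t) (3 * t + 2) = 1/2 - bb t \<and> Tl (2 * t + 1) (3 * t + 3) = 1/2 - bb t / 2"
proof (induction t rule: nat_induct_at_least)
  case base
  have U: "Tl (2 * 1) (3 * 1 + 2) = 1/2 - bb 1" using Tl_2_5 bb_1 by simp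
  have V: "Tl (2 * 1 + 1) (3 * 1 + 3) = (Tl 2 5 + Tl 2 4) / 2" using Tl_shift[of 2 6] by simp
  have "Tl 2 4 = p 2 4 + Tl 2 5" using Tl_split[of 4 2] by simp
  moreover have "p 2 4 = bb 1" unfolding bb_def by simp
  ultimately show ?case using U V Tl_2_5 bb_1 by simp
next
  case (Suc t)
  define U where "U = Tl (2 * t) (3 * t + 2)"
  define V where "V = Tl (2 * t + 1) (3 * t + 3)"
  define c where "c = p (2 * t + 1) (3 * t + 3)"
  have hU: "U = 1/2 - bb t" and hV: "V = 1/2 - bb t / 2" using Suc(2) unfolding U_def V_def by auto
  have B': "bb (Suc t) = (c + bb t) / 2"
  proof -
    have "bb (Suc t) = p (Suc (2 * t + 1)) (3 * t + 4)" unfolding bb_def by (simp add: add.commute)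
    also have "\<dots> = (p (2 * t + 1) (3 * t + 3) + p (2 * t + 1) (3 * t + 2)) / 2"
      by (rule p_rec') simp_all
    finally show ?thesis using p_diag2[OF Suc(1)] unfolding c_def by simp
  qed
  have a1: "Tl (Suc (2 * t + 1)) (3 * t + 5) = (Tl (2 * t + 1) (3 * t + 4) + Tl (2 * t + 1) (3 * t + 3)) / 2"
    using Tl_shift[of "2 * t + 1" "3 * t + 5"] by (simp add: add.commute)
  have a2: "Tl (2 * t + 1) (3 * t + 3) = c + Tl (2 * t + 1) (3 * t + 4)"
    using Tl_split[of "3 * t + 3" "2 * t + 1"] Suc(1) unfolding c_def by (simp add: add.commute)
  have a3: "Tl (Suc (2 * t + 2)) (3 * t + 6) = (Tl (2 * t + 2) (3 * t + 5) + Tl (2 * t + 2) (3 * t + 4)) / 2"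
    using Tl_shift[of "2 * t + 2" "3 * t + 6"] by (simp add: add.commute)
  have a4: "Tl (2 * t + 2) (3 * t + 4) = bb (Suc t) + Tl (2 * t + 2) (3 * t + 5)"
  proof -
    have "Tl (2 * t + 2) (3 * t + 4) = p (2 * t + 2) (3 * t + 4) + Tl (2 * t + 2) (Suc (3 * t + 4))"
      by (rule Tl_split) (use Suc(1) in simp)
    moreover have "p (2 * t + 2) (3 * t + 4) = bb (Suc t)" unfolding bb_def by (simp add: add.commute)
    ultimately show ?thesis by (simp add: add.commute)
  qed
  have U': "Tl (2 * t + 2) (3 * t + 5) = 1/2 - bb (Suc t)"
  proof -
    have "Tl (2 * t + 2) (3 * t + 5) = Tl (Suc (2 * t + 1)) (3 * t + 5)" by simp
    then have "Tl (2 * t + 2) (3 * t + 5) = (Tl (2 * t + 1) (3 * t + 4) + V) / 2" using a1 unfolding V_def by simp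
    moreover have "Tl (2 * t + 1) (3 * t + 4) = V - c" using a2 unfolding V_def by simp
    ultimately show ?thesis using hV B' by (simp add: field_simps)
  qed
  have V': "Tl (2 * t + 3) (3 * t + 6) = 1/2 - bb (Suc t) / 2"
  proof -
    have ee: "2 * t + 3 = Suc (2 * t + 2)" by simp
    have "Tl (2 * t + 3) (3 * t + 6) = Tl (Suc (2 * t + 2)) (3 * t + 6)" by (simp only: ee)
    then show ?thesis using a3 a4 U' by (simp add: field_simps)
  qed
  have f1: "Tl (2 * Suc t) (3 * Suc t + 2) = Tl (2 * t + 2) (3 * t + 5)" by (rule arg_cong2[where f=Tl]) simp_all
  have f2: "Tl (2 * Suc t + 1) (3 * Suc t + 3) = Tl (2 * t + 3) (3 * t + 6)" by (rule arg_cong2[where f=Tl]) simp_all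
  show ?case using f1 f2 U' V' by simp
qed

lemma EL_Sg: "EL n \<le> Sg n real - (\<Sum>k<2 * n + 1. clampv n k)"
proof -
  have e: "{0..2 * n} = {..<2 * n + 1}" by auto
  have "EL n \<le> (\<Sum>k<2 * n + 1. real k * p n k - clampv n k)" using EL_le[of n] unfolding e .
  also have "\<dots> = Sg n real - (\<Sum>k<2 * n + 1. clampv n k)" unfolding Sg_def by (simp add: sum_subtractf)
  finally show ?thesis .
qed

lemma sum_delta_c: "(j::nat) < B \<Longrightarrow> (\<Sum>k<B. of_bool (k = j) * c) = (c :: real)"
proof -
  assume j: "j < B"
  have "(\<Sum>k<B. of_bool (k = j) * c) = (\<Sum>k<B. if k = j then c else 0)" by (intro sum.cong) auto
  also have "\<dots> = c" using j by (subst sum.delta) auto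
  finally show ?thesis .
qed

lemma gap_even: assumes t: "t \<ge> 1" shows "3/2 * (2 * real t) - EL (2 * t) \<ge> X t / 2"
proof -
  define n where "n = 2 * t"
  have xb: "0 \<le> X t" "X t \<le> bb t" using X_bounds[OF t] by auto
  have trm: "clampv n k \<ge> of_bool (k = 3 * t) * d n (3 * t) + of_bool (k = 3 * t + 1) * d n (3 * t + 1)
      + of_bool (3 * t + 2 \<le> k) * p n k" for k
  proof -
    consider (a) "k = 3 * t" | (b) "k = 3 * t + 1" | (c) "3 * t + 2 \<le> k" | (e) "k < 3 * t" by linarith
    then show ?thesis
    proof cases
      case a
      have "d (Suc n) k = X t - bb t" using d_Suc[of n k] p_diag0[OF t] a unfolding n_def X_def by simp
      then have "d (Suc n) k \<le> 0" using xb by simp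
      then show ?thesis using clamp_part[of n k] a by simp
    next
      case b
      have "d (Suc n) k = - X t / 2" using d_Suc[of n k] Y_val[OF t] b unfolding n_def bb_def by simp
      then have "d (Suc n) k \<le> 0" using xb by simp
      then show ?thesis using clamp_part[of n k] b by simp
    next
      case c
      have "d (Suc n) k \<ge> 0" by (rule dpos[OF t c]) (simp add: n_def)
      then show ?thesis using clamp_full[of n k] c by simp
    next
      case e then show ?thesis using clamp_nonneg[of n k] by simp
    qed
  qed
  have B: "2 * n + 1 = 4 * t + 1" unfolding n_def by simp
  have "(\<Sum>k<2 * n + 1. of_bool (k = 3 * t) * d n (3 * t) + of_bool (k = 3 * t + 1) * d n (3 * t + 1)
      + of_bool (3 * t + 2 \<le> k) * p n k) = (\<Sum>k<2 * n + 1. of_bool (k = 3 * t) * d n (3 * t)) + (\<Sum>k<2 * n + 1. of_bool (k = 3 * t + 1) * d n (3 * t + 1))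
      + (\<Sum>k<2 * n + 1. of_bool (3 * t + 2 \<le> k) * p n k)"
    by (simp add: sum.distrib)
  also have "\<dots> = d n (3 * t) + d n (3 * t + 1) + Tl n (3 * t + 2)"
  proof -
    have "(\<Sum>k<2 * n + 1. of_bool (k = 3 * t) * d n (3 * t)) = d n (3 * t)" by (rule sum_delta_c) (use B t in simp)
    moreover have "(\<Sum>k<2 * n + 1. of_bool (k = 3 * t + 1) * d n (3 * t + 1)) = d n (3 * t + 1)" by (rule sum_delta_c) (use B t in simp)
    moreover have "(\<Sum>k<2 * n + 1. of_bool (3 * t + 2 \<le> k) * p n k) = Tl n (3 * t + 2)" unfolding Tl_def Sg_def ..
    ultimately show ?thesis by simp
  qed
  also have "\<dots> = 1/2 + X t / 2" using tails[OF t] Y_val[OF t] unfolding n_def X_def by simp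
  finally have eq: "(\<Sum>k<2 * n + 1. of_bool (k = 3 * t) * d n (3 * t) + of_bool (k = 3 * t + 1) * d n (3 * t + 1)
      + of_bool (3 * t + 2 \<le> k) * p n k) = 1/2 + X t / 2" .
  have le: "(\<Sum>k<2 * n + 1. of_bool (k = 3 * t) * d n (3 * t) + of_bool (k = 3 * t + 1) * d n (3 * t + 1)
      + of_bool (3 * t + 2 \<le> k) * p n k) \<le> (\<Sum>k<2 * n + 1. clampv n k)"
    by (rule sum_mono) (rule trm)
  have c: "1/2 + X t / 2 \<le> (\<Sum>k<2 * n + 1. clampv n k)" using eq le by simp
  have m: "Sg n real = 3 * real t + 1/2" using mean[of n] t unfolding n_def by simp
  show ?thesis using EL_Sg[of n] c m unfolding n_def by simp
qed

lemma gap_odd: assumes t: "t \<ge> 1" shows "3/2 * (2 * real t + 1) - EL (2 * t + 1) \<ge> X t / 4"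
proof -
  define n where "n = 2 * t + 1"
  have xb: "0 \<le> X t" "X t \<le> bb t" using X_bounds[OF t] by auto
  have trm: "clampv n k \<ge> of_bool (k = 3 * t + 2) * d n (3 * t + 2) + of_bool (3 * t + 3 \<le> k) * p n k" for k
  proof -
    consider (a) "k = 3 * t + 2" | (c) "3 * t + 3 \<le> k" | (e) "k < 3 * t + 2" by linarith
    then show ?thesis
    proof cases
      case a
      have "d (Suc n) k = bb t / 2 + X t / 4 - bb t" using d_Suc[of n k] p_diag2[OF t] W_val[OF t] a unfolding n_def by simp
      then have "d (Suc n) k \<le> 0" using xb by simp
      then show ?thesis using clamp_part[of n k] a by simp
    next
      case c
      have "d (Suc n) k \<ge> 0" by (rule dpos2[OF c]) (simp add: n_def)
      then show ?thesis using clamp_full[of n k] c by simp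
    next
      case e then show ?thesis using clamp_nonneg[of n k] by simp
    qed
  qed
  have B: "2 * n + 1 = 4 * t + 3" unfolding n_def by simp
  have "(\<Sum>k<2 * n + 1. of_bool (k = 3 * t + 2) * d n (3 * t + 2) + of_bool (3 * t + 3 \<le> k) * p n k) = (\<Sum>k<2 * n + 1. of_bool (k = 3 * t + 2) * d n (3 * t + 2)) + (\<Sum>k<2 * n + 1. of_bool (3 * t + 3 \<le> k) * p n k)"
    by (simp add: sum.distrib)
  also have "\<dots> = d n (3 * t + 2) + Tl n (3 * t + 3)"
  proof -
    have "(\<Sum>k<2 * n + 1. of_bool (k = 3 * t + 2) * d n (3 * t + 2)) = d n (3 * t + 2)" by (rule sum_delta_c) (use B t in simp)
    moreover have "(\<Sum>k<2 * n + 1. of_bool (3 * t + 3 \<le> k) * p n k) = Tl n (3 * t + 3)" unfolding Tl_def Sg_def ..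
    ultimately show ?thesis by simp
  qed
  also have "\<dots> = 1/2 + X t / 4" using tails[OF t] W_val[OF t] unfolding n_def by simp
  finally have eq: "(\<Sum>k<2 * n + 1. of_bool (k = 3 * t + 2) * d n (3 * t + 2) + of_bool (3 * t + 3 \<le> k) * p n k) = 1/2 + X t / 4" .
  have le: "(\<Sum>k<2 * n + 1. of_bool (k = 3 * t + 2) * d n (3 * t + 2) + of_bool (3 * t + 3 \<le> k) * p n k) \<le> (\<Sum>k<2 * n + 1. clampv n k)"
    by (rule sum_mono) (rule trm)
  have c: "1/2 + X t / 4 \<le> (\<Sum>k<2 * n + 1. clampv n k)" using eq le by simp
  have m: "Sg n real = 3 * real t + 2" using mean[of n] t unfolding n_def by (simp add: field_simps)
  have "EL n \<le> 3 * real t + 3/2 - X t / 4" using EL_Sg[of n] c m by argo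
  then show ?thesis unfolding n_def by argo
qed

lemma X_err: "t \<ge> 1 \<Longrightarrow> \<bar>X t - 2/9 * bb t\<bar> \<le> 1 / (6 * real t)"
proof (induction t rule: nat_induct_at_least)
  case base then show ?case using X_1 bb_1 by simp
next
  case (Suc t)
  define e where "e = X t - 2/9 * bb t"
  define b where "b = bb t"
  have t1: "real t \<ge> 1" using Suc(1) by simp
  have bpos: "b > 0" "b \<le> 1/2" using bb_pos[OF Suc(1)] bb_le[OF Suc(1)] unfolding b_def by auto
  have xs: "X (Suc t) = b / 4 - X t / 8" using diag_all[OF Suc(1)] unfolding b_def by simp
  have bs: "bb (Suc t) = b * (2 * t + 1) / (2 * t + 2)" using bb_step[OF Suc(1)] unfolding b_def by simp
  have id: "X (Suc t) - 2/9 * bb (Suc t) = - e / 8 + b / (9 * (real t + 1))"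
    unfolding xs bs e_def b_def using t1 by (simp add: field_simps)
  have he: "\<bar>e\<bar> \<le> 1 / (6 * real t)" using Suc(2) unfolding e_def .
  define q where "q = b / (9 * (real t + 1))"
  have qpos: "q \<ge> 0" using bpos t1 unfolding q_def by simp
  have "\<bar>- e / 8 + q\<bar> \<le> \<bar>- e / 8\<bar> + \<bar>q\<bar>" by (rule abs_triangle_ineq)
  also have "\<bar>- e / 8\<bar> + \<bar>q\<bar> = \<bar>e\<bar> / 8 + q" using qpos by simp
  also have "\<bar>e\<bar> / 8 \<le> (1 / (6 * real t)) / 8" using he by (rule divide_right_mono) simp
  also have "q \<le> (1/2) / (9 * (real t + 1))" unfolding q_def using bpos t1 by (intro divide_right_mono) auto
  also have "(1 / (6 * real t)) / 8 = 1 / (48 * real t)" by simp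
  also have "1 / (48 * real t) \<le> 1 / (9 * (real t + 1))"
    by (rule divide_left_mono) (use t1 in auto)
  also have "1 / (9 * (real t + 1)) + (1/2) / (9 * (real t + 1)) = 1 / (6 * real (Suc t))"
  proof -
    have "1 / (9 * (real t + 1)) + (1/2) / (9 * (real t + 1)) = (1 + 1/2) / (9 * (real t + 1))" by (rule add_divide_distrib[symmetric])
    also have "\<dots> = (3/2) / (9 * (real t + 1))" by simp
    also have "\<dots> = ((3/2) / 9) / (real t + 1)" by (simp only: divide_divide_eq_left)
    also have "((3/2) / 9 :: real) = 1 / 6" by simp
    also have "(1 / 6) / (real t + 1) = 1 / (6 * (real t + 1))" by (simp only: divide_divide_eq_left)
    finally show ?thesis by simp
  qed
  finally have fin: "\<bar>- e / 8 + q\<bar> \<le> 1 / (6 * real (Suc t))" by simp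
  show ?case using id fin unfolding q_def by simp
qed

lemma X_lower: "t \<ge> 1 \<Longrightarrow> X t \<ge> 2/9 * bb t - 1 / (6 * real t)"
  using X_err[of t] by (simp add: abs_le_iff)

definition Wp :: "nat \<Rightarrow> real" where "Wp n = (\<Prod>k=1..n. (4*real k^2) / (4*real k^2 - 1))"

lemma bb_wallis: "t \<ge> 1 \<Longrightarrow> bb t ^ 2 * (2 * real t + 1) * Wp t = 1"
proof (induction t rule: nat_induct_at_least)
  case base then show ?case unfolding Wp_def bb_1 by (simp add: power2_eq_square)
next
  case (Suc t)
  have w: "Wp (Suc t) = Wp t * ((4 * (real t + 1)^2) / ((2 * real t + 1) * (2 * real t + 3)))"
  proof -
    have "Wp (Suc t) = (4*real (Suc t)^2) / (4*real (Suc t)^2 - 1) * Wp t"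
      unfolding Wp_def by (simp add: prod.nat_ivl_Suc')
    moreover have "4*real (Suc t)^2 - 1 = (2 * real t + 1) * (2 * real t + 3)" by (simp add: power2_eq_square algebra_simps)
    ultimately show ?thesis by (simp add: power2_eq_square algebra_simps)
  qed
  define r where "r = (2 * real t + 1) / (2 * real t + 2)"
  define sf where "sf = (4 * (real t + 1)^2) / ((2 * real t + 1) * (2 * real t + 3))"
  have bs: "bb (Suc t) = bb t * r" using bb_step[OF Suc(1)] unfolding r_def by (simp add: add.commute)
  have key: "r ^ 2 * (2 * real t + 3) * sf = 2 * real t + 1"
  proof -
    have n1: "2 * real t + 2 \<noteq> 0" "2 * real t + 1 \<noteq> 0" "2 * real t + 3 \<noteq> 0" by linarith+
    have "r ^ 2 * (2 * real t + 3) * sf = (2 * real t + 1)^2 * (2 * real t + 3) * (4 * (real t + 1)^2) / ((2 * real t + 2)^2 * ((2 * real t + 1) * (2 * real t + 3)))"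
      unfolding r_def sf_def by (simp add: power_divide)
    also have "(2 * real t + 2)^2 = 4 * (real t + 1)^2" by (simp add: power2_eq_square algebra_simps)
    also have "(2 * real t + 1)^2 * (2 * real t + 3) * (4 * (real t + 1)^2) = (2 * real t + 1) * ((4 * (real t + 1)^2) * ((2 * real t + 1) * (2 * real t + 3)))"
      by (simp add: power2_eq_square algebra_simps)
    also have "(2 * real t + 1) * ((4 * (real t + 1)^2) * ((2 * real t + 1) * (2 * real t + 3))) / (4 * (real t + 1)^2 * ((2 * real t + 1) * (2 * real t + 3))) = 2 * real t + 1"
      using n1 by simp
    finally show ?thesis .
  qed
  have ws: "Wp (Suc t) = Wp t * sf" using w unfolding sf_def .
  have "bb (Suc t) ^ 2 * (2 * real (Suc t) + 1) * Wp (Suc t) = bb t ^ 2 * Wp t * (r ^ 2 * (2 * real t + 3) * sf)"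
    unfolding bs ws by (simp add: power_mult_distrib algebra_simps)
  also have "\<dots> = bb t ^ 2 * (2 * real t + 1) * Wp t" using key by simp
  finally show ?case using Suc(2) by simp
qed

lemma Wp_lim: "Wp \<longlonglongrightarrow> pi / 2"
  unfolding Wp_def using wallis .

lemma bb_sq_lim: "(\<lambda>t. bb t ^ 2 * (2 * real t + 1)) \<longlonglongrightarrow> 2 / pi"
proof -
  have "(\<lambda>t. inverse (Wp t)) \<longlonglongrightarrow> inverse (pi / 2)" by (rule tendsto_inverse[OF Wp_lim]) simp
  moreover have "eventually (\<lambda>t. inverse (Wp t) = bb t ^ 2 * (2 * real t + 1)) sequentially"
  proof (rule eventually_sequentiallyI[of 1])
    fix t :: nat assume "t \<ge> 1"
    then show "inverse (Wp t) = bb t ^ 2 * (2 * real t + 1)" using bb_wallis[of t]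
      by (metis inverse_unique mult.commute)
  qed
  ultimately show ?thesis by (simp add: tendsto_cong)
qed

lemma frac_lim: "(\<lambda>t. real t / (2 * real t + 1)) \<longlonglongrightarrow> 1 / 2"
proof -
  have "(\<lambda>t. 1 / (2 + inverse (real t))) \<longlonglongrightarrow> 1 / (2 + 0)"
    by (intro tendsto_intros lim_inverse_n) simp
  moreover have "eventually (\<lambda>t. 1 / (2 + inverse (real t)) = real t / (2 * real t + 1)) sequentially"
  proof (rule eventually_sequentiallyI[of 1])
    fix t :: nat assume "t \<ge> 1"
    then show "1 / (2 + inverse (real t)) = real t / (2 * real t + 1)" by (simp add: field_simps)
  qed
  ultimately show ?thesis by (simp add: tendsto_cong)
qed

lemma bb_sqrt_lim: "(\<lambda>t. bb t * sqrt (real t)) \<longlonglongrightarrow> 1 / sqrt pi"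
proof -
  have "(\<lambda>t. bb t ^ 2 * (2 * real t + 1) * (real t / (2 * real t + 1))) \<longlonglongrightarrow> 2 / pi * (1/2)"
    by (rule tendsto_mult[OF bb_sq_lim frac_lim])
  then have l: "(\<lambda>t. sqrt (bb t ^ 2 * (2 * real t + 1) * (real t / (2 * real t + 1)))) \<longlonglongrightarrow> sqrt (2 / pi * (1/2))"
    by (rule tendsto_real_sqrt)
  have "eventually (\<lambda>t. sqrt (bb t ^ 2 * (2 * real t + 1) * (real t / (2 * real t + 1))) = bb t * sqrt (real t)) sequentially"
  proof (rule eventually_sequentiallyI[of 1])
    fix t :: nat assume t: "t \<ge> 1"
    have "bb t ^ 2 * (2 * real t + 1) * (real t / (2 * real t + 1)) = bb t ^ 2 * real t"
      by (simp add: field_simps)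
    then show "sqrt (bb t ^ 2 * (2 * real t + 1) * (real t / (2 * real t + 1))) = bb t * sqrt (real t)"
      using bb_pos[OF t] by (simp add: real_sqrt_mult)
  qed
  moreover have "sqrt (2 / pi * (1/2)) = 1 / sqrt pi" by (simp add: real_sqrt_divide)
  ultimately show ?thesis using l by (simp add: tendsto_cong)
qed

lemma sqrt_over_lim: "(\<lambda>t. sqrt (real t) / real t) \<longlonglongrightarrow> 0"
proof -
  have "filterlim (\<lambda>t. sqrt (real t)) at_top sequentially"
    by (rule filterlim_compose[OF sqrt_at_top filterlim_real_sequentially])
  then have "(\<lambda>t. inverse (sqrt (real t))) \<longlonglongrightarrow> 0" by (rule tendsto_inverse_0_at_top)
  moreover have "eventually (\<lambda>t. inverse (sqrt (real t)) = sqrt (real t) / real t) sequentially"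
  proof (rule eventually_sequentiallyI[of 1])
    fix t :: nat assume t: "t \<ge> 1"
    have "sqrt (real t) * sqrt (real t) = real t" by simp
    have s0: "sqrt (real t) \<noteq> 0" "real t \<noteq> 0" using t by auto
    then show "inverse (sqrt (real t)) = sqrt (real t) / real t" by (simp add: field_simps)
  qed
  ultimately show ?thesis by (simp add: tendsto_cong)
qed

lemma powr_half: "t \<ge> 1 \<Longrightarrow> sqrt (real t) * real t powr (-1/2) = 1"
proof -
  assume t: "t \<ge> 1"
  have "real t powr (-1/2) = 1 / real t powr (1/2)" using powr_minus_divide[of "real t" "1/2"] by simp
  also have "\<dots> = 1 / sqrt (real t)" by (simp add: powr_half_sqrt)
  finally show ?thesis using t by simp
qed

lemma lowL: "t \<ge> 1 \<Longrightarrow> X t / 4 \<ge> bb t / 18 - 1 / (24 * real t)"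
  using X_lower[of t] by (simp add: field_simps)

lemma lowL2: "t \<ge> 1 \<Longrightarrow> X t / 2 \<ge> bb t / 9 - 1 / (12 * real t)"
  using X_lower[of t] by (simp add: field_simps)

lemma conv: "t \<ge> 1 \<Longrightarrow> (x * sqrt (real t) / C - (sqrt (real t) / real t) / D) * real t powr (-1/2) = x / C - 1 / (D * real t)"
proof -
  assume t: "t \<ge> 1"
  define s where "s = sqrt (real t)"
  define w where "w = real t powr (-1/2)"
  have sw: "s * w = 1" unfolding s_def w_def using powr_half[OF t] .
  have "(x * s / C - (s / real t) / D) * w = x / C * (s * w) - (s * w) / (D * real t)"
    by (simp add: algebra_simps)
  then show ?thesis unfolding s_def[symmetric] w_def[symmetric] using sw by simp
qed

theorem mainTheorem14:
  shows "(\<exists>g :: nat \<Rightarrow> real. (g \<longlongrightarrow> 0) at_top \<and>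
           (\<forall>\<^sub>F t in at_top. 3/2 * (2 * real t + 1) - EL (2 * t + 1)
              \<ge> (1 / (18 * sqrt pi) + g t) * real t powr (-1/2)))
       \<and> (\<exists>g :: nat \<Rightarrow> real. (g \<longlongrightarrow> 0) at_top \<and>
           (\<forall>\<^sub>F t in at_top. 3/2 * (2 * real t) - EL (2 * t)
              \<ge> (1 / (9 * sqrt pi) + g t) * real t powr (-1/2)))
       \<and> (\<forall>c::real. 0 < c \<and> c < sqrt 2 / (18 * sqrt pi) \<longrightarrow>
           (\<exists>n0::nat. \<forall>n\<ge>n0. EL n \<le> 3/2 * real n - c / sqrt (real n)))"
proof (intro conjI)
  have L1: "(\<lambda>t. bb t * sqrt (real t)) \<longlonglongrightarrow> 1 / sqrt pi" by (rule bb_sqrt_lim)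
  have L2: "(\<lambda>t. sqrt (real t) / real t) \<longlonglongrightarrow> 0" by (rule sqrt_over_lim)
  show "\<exists>g :: nat \<Rightarrow> real. (g \<longlongrightarrow> 0) at_top \<and>
           (\<forall>\<^sub>F t in at_top. 3/2 * (2 * real t + 1) - EL (2 * t + 1)
              \<ge> (1 / (18 * sqrt pi) + g t) * real t powr (-1/2))"
  proof (intro exI conjI)
    define g where "g = (\<lambda>t. bb t * sqrt (real t) / 18 - (sqrt (real t) / real t) / 24 - 1 / (18 * sqrt pi))"
    have "g \<longlonglongrightarrow> (1 / sqrt pi) / 18 - 0 / 24 - 1 / (18 * sqrt pi)"
      unfolding g_def by (intro tendsto_intros L1 L2) auto
    then show "(g \<longlongrightarrow> 0) at_top" by simp
    show "\<forall>\<^sub>F t in at_top. 3/2 * (2 * real t + 1) - EL (2 * t + 1) \<ge> (1 / (18 * sqrt pi) + g t) * real t powr (-1/2)"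
    proof (rule eventually_sequentiallyI[of 1])
      fix t :: nat assume t: "t \<ge> 1"
      have "(1 / (18 * sqrt pi) + g t) * real t powr (-1/2) = (bb t * sqrt (real t) / 18 - (sqrt (real t) / real t) / 24) * real t powr (-1/2)"
        unfolding g_def by simp
      also have "\<dots> = bb t / 18 - 1 / (24 * real t)" by (rule conv[OF t])
      also have "\<dots> \<le> X t / 4" by (rule lowL[OF t])
      also have "\<dots> \<le> 3/2 * (2 * real t + 1) - EL (2 * t + 1)" by (rule gap_odd[OF t])
      finally show "3/2 * (2 * real t + 1) - EL (2 * t + 1) \<ge> (1 / (18 * sqrt pi) + g t) * real t powr (-1/2)" .
    qed
  qed
  show "\<exists>g :: nat \<Rightarrow> real. (g \<longlongrightarrow> 0) at_top \<and>
           (\<forall>\<^sub>F t in at_top. 3/2 * (2 * real t) - EL (2 * t)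
              \<ge> (1 / (9 * sqrt pi) + g t) * real t powr (-1/2))"
  proof (intro exI conjI)
    define g where "g = (\<lambda>t. bb t * sqrt (real t) / 9 - (sqrt (real t) / real t) / 12 - 1 / (9 * sqrt pi))"
    have "g \<longlonglongrightarrow> (1 / sqrt pi) / 9 - 0 / 12 - 1 / (9 * sqrt pi)"
      unfolding g_def by (intro tendsto_intros L1 L2) auto
    then show "(g \<longlongrightarrow> 0) at_top" by simp
    show "\<forall>\<^sub>F t in at_top. 3/2 * (2 * real t) - EL (2 * t) \<ge> (1 / (9 * sqrt pi) + g t) * real t powr (-1/2)"
    proof (rule eventually_sequentiallyI[of 1])
      fix t :: nat assume t: "t \<ge> 1"
      have "(1 / (9 * sqrt pi) + g t) * real t powr (-1/2) = (bb t * sqrt (real t) / 9 - (sqrt (real t) / real t) / 12) * real t powr (-1/2)"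
        unfolding g_def by simp
      also have "\<dots> = bb t / 9 - 1 / (12 * real t)" by (rule conv[OF t])
      also have "\<dots> \<le> X t / 2" by (rule lowL2[OF t])
      also have "\<dots> \<le> 3/2 * (2 * real t) - EL (2 * t)" by (rule gap_even[OF t])
      finally show "3/2 * (2 * real t) - EL (2 * t) \<ge> (1 / (9 * sqrt pi) + g t) * real t powr (-1/2)" .
    qed
  qed
  show "\<forall>c::real. 0 < c \<and> c < sqrt 2 / (18 * sqrt pi) \<longrightarrow>
           (\<exists>n0::nat. \<forall>n\<ge>n0. EL n \<le> 3/2 * real n - c / sqrt (real n))"
  proof (intro allI impI)
    fix c :: real assume c: "0 < c \<and> c < sqrt 2 / (18 * sqrt pi)"
    define h where "h = (\<lambda>t. sqrt 2 * (bb t * sqrt (real t) / 18 - (sqrt (real t) / real t) / 24))"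
    have "h \<longlonglongrightarrow> sqrt 2 * ((1 / sqrt pi) / 18 - 0 / 24)"
      unfolding h_def by (intro tendsto_intros L1 L2) auto
    moreover have "sqrt 2 * ((1 / sqrt pi) / 18 - 0 / 24) = sqrt 2 / (18 * sqrt pi)" by simp
    ultimately have "h \<longlonglongrightarrow> sqrt 2 / (18 * sqrt pi)" by (simp only:)
    then have "eventually (\<lambda>t. c < h t) sequentially" using c by (intro order_tendstoD(1)) auto
    then obtain T where T: "\<And>t. t \<ge> T \<Longrightarrow> c < h t" unfolding eventually_sequentially by blast
    show "\<exists>n0::nat. \<forall>n\<ge>n0. EL n \<le> 3/2 * real n - c / sqrt (real n)"
    proof (intro exI allI impI)
      fix n :: nat assume n: "n \<ge> 2 * (T + 1)"
      define t where "t = n div 2"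
      have t1: "t \<ge> 1" and tT: "t \<ge> T" using n unfolding t_def by auto
      define L where "L = bb t / 18 - 1 / (24 * real t)"
      have gapn: "3/2 * real n - EL n \<ge> L"
      proof (cases "even n")
        case True
        then have nn: "n = 2 * t" unfolding t_def by simp
        have "L \<le> X t / 4" unfolding L_def by (rule lowL[OF t1])
        also have "\<dots> \<le> X t / 2" using X_bounds[OF t1] by simp
        also have "\<dots> \<le> 3/2 * (2 * real t) - EL (2 * t)" by (rule gap_even[OF t1])
        finally show ?thesis using nn by simp
      next
        case False
        then have nn: "n = 2 * t + 1" unfolding t_def by presburger
        have "L \<le> X t / 4" unfolding L_def by (rule lowL[OF t1])
        also have "\<dots> \<le> 3/2 * (2 * real t + 1) - EL (2 * t + 1)" by (rule gap_odd[OF t1])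
        finally show ?thesis using nn by (simp add: add.commute)
      qed
      have st: "sqrt (real t) > 0" using t1 by simp
      have ht: "h t = sqrt 2 * sqrt (real t) * L"
      proof -
        have "sqrt (real t) / real t / 24 = sqrt (real t) * (1 / (24 * real t))" by simp
        then show ?thesis unfolding h_def L_def by (simp add: algebra_simps)
      qed
      have cL: "c < sqrt 2 * sqrt (real t) * L" using T[OF tT] ht by simp
      have pos: "sqrt 2 * sqrt (real t) > 0" using st by simp
      have "c / (sqrt 2 * sqrt (real t)) < L" using cL pos by (simp add: pos_divide_less_eq mult.commute)
      moreover have "sqrt (real (2 * t)) = sqrt 2 * sqrt (real t)" by (simp add: real_sqrt_mult)
      moreover have "c / sqrt (real n) \<le> c / sqrt (real (2 * t))"
      proof (rule divide_left_mono)
        show "sqrt (real (2 * t)) \<le> sqrt (real n)" unfolding t_def by simp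
        show "0 \<le> c" using c by simp
        show "0 < sqrt (real n) * sqrt (real (2 * t))" using t1 n unfolding t_def by simp
      qed
      ultimately have "c / sqrt (real n) < L" by simp
      then show "EL n \<le> 3/2 * real n - c / sqrt (real n)" using gapn by simp
    qed
  qed
qed

end
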